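(* Let $\hat\mu\in\operatorname{conv}\{g_1,\dots,g_N\}$ and run the MW–MMW rounds for the fixed center $\hat\mu$ with uniform initialization $w^{(1)}=(1/N,\dots,1/N)$, with $0<\eta_\rho\nu\le1/2$, $0<\eta_w\nu\le1/2$. Then $\bar S=S(\bar w;\hat\mu)$ and $$\|\bar S\|_{op}\le(1+\eta_\rho\nu)(1+\eta_w\nu)\,\mathrm{OPT}(\hat\mu)+\frac{(1+\eta_\rho\nu)\log\frac1{1-\epsilon}}{T\eta_w}+\frac{\log p}{T\eta_\rho}.$$ Consequently, if $\nu>0$, $\epsilon\in(0,1)$, $p\ge2$, and one chooses $$\eta_w=\frac1\nu\sqrt{\frac{\log\frac1{1-\epsilon}}{T}},\quad \eta_\rho=\frac1\nu\sqrt{\frac{\log p}{T}},\quad T\ge4\max\Big\{\log\tfrac1{1-\epsilon},\log p\Big\},$$ then $$\gamma(\bar w;\hat\mu)-\mathrm{OPT}(\hat\mu)\le 4\nu\left(\sqrt{\frac{\log\frac1{1-\epsilon}}{T}}+\sqrt{\frac{\log p}{T}}\right).$$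
   Context: Fix integers $N\ge1$, $p\ge1$, $\epsilon\in[0,1)$ and vectors $g_1,\dots,g_N\in\mathbb R^p$. The capped simplex is $\Delta_{N,\epsilon}=\{w\in\mathbb R^N:\sum_n w_n=1,\ 0\le w_n\le \frac{1}{(1-\epsilon)N}\}$; density matrices $\mathfrak D_p=\{\rho\in\mathbb R^{p\times p}:\rho=\rho^\top\succeq0,\mathrm{Tr}\,\rho=1\}$; $\langle A,B\rangle=\mathrm{Tr}(A^\top B)$. For a center $\hat\mu$ and $w\in\mathbb R^N$: $S(w;\hat\mu)=\sum_n w_n(g_n-\hat\mu)(g_n-\hat\mu)^\top$, $\gamma(w;\hat\mu)=\|S(w;\hat\mu)\|_{op}$, $\mathrm{OPT}(\hat\mu)=\min_{w\in\Delta_{N,\epsilon}}\max_{\rho\in\mathfrak D_p}\langle S(w;\hat\mu),\rho\rangle$; $\nu=\max_{i,j}\|g_i-g_j\|_2^2$. Relative entropy: $\mathrm{RE}(w\|v)=\sum_n w_n\log(w_n/v_n)$. MW–MMW rounds for a fixed center $\hat\mu$: $z_n=g_n-\hat\mu$, initial weights $w^{(1)}$, step sizes $\eta_w,\eta_\rho>0$, $T\ge1$. For $t=1,\dots,T$: $S^{(t)}=\sum_n w^{(t)}_n z_nz_n^\top$; $\rho^{(t)}=\exp(\eta_\rho\sum_{t'=1}^t S^{(t')})/\mathrm{Tr}\exp(\eta_\rho\sum_{t'=1}^tS^{(t')})$; $m^{(t)}_n=z_n^\top\rho^{(t)}z_n$; $\tilde w^{(t)}_n=w^{(t)}_n(1-\eta_w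 m^{(t)}_n)$; $w^{(t+1)}=\arg\min_{w\in\Delta_{N,\epsilon}}\mathrm{RE}(w\|\tilde w^{(t)})$. Outputs: $\bar w=\frac1T\sum_{t=1}^Tw^{(t)}$, $\bar S=\frac1T\sum_{t=1}^TS^{(t)}$. *)

theory Defs
  imports "HOL-Analysis.Analysis"
begin

text \<open>Index types: 'n (with N = CARD('n)) indexes the data points g_1..g_N,
  'p (with p = CARD('p)) indexes the coordinates of R^p. Weights are functions 'n => real.\<close>

definition outer :: "real^'p \<Rightarrow> real^'p \<Rightarrow> real^'p^'p" where
  "outer x y = (\<chi> i j. x$i * y$j)"

definition capped_simplex :: "real \<Rightarrow> ('n::finite \<Rightarrow> real) set" where
  "capped_simplex eps = {w. (\<Sum>n\<in>UNIV. w n) = 1 \<and>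
      (\<forall>n. 0 \<le> w n \<and> w n \<le> 1 / ((1 - eps) * real CARD('n)))}"

definition density_matrices :: "(real^'p^'p) set" where
  "density_matrices = {\<rho>. transpose \<rho> = \<rho> \<and> (\<forall>x. 0 \<le> x \<bullet> (\<rho> *v x)) \<and> trace \<rho> = 1}"

definition mat_inner :: "real^'p^'p \<Rightarrow> real^'p^'p \<Rightarrow> real" where
  "mat_inner A B = trace (transpose A ** B)"

definition op_norm :: "real^'p^'p \<Rightarrow> real" where
  "op_norm A = onorm (\<lambda>x. A *v x)"

definition Smat :: "('n::finite \<Rightarrow> real^'p) \<Rightarrow> real^'p \<Rightarrow> ('n \<Rightarrow> real) \<Rightarrow> real^'p^'p" where
  "Smat g mu w = (\<Sum>n\<in>UNIV. w n *\<^sub>R outer (g n - mu) (g n - mu))"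

definition gamma_val :: "('n::finite \<Rightarrow> real^'p) \<Rightarrow> real^'p \<Rightarrow> ('n \<Rightarrow> real) \<Rightarrow> real" where
  "gamma_val g mu w = op_norm (Smat g mu w)"

definition OPT :: "real \<Rightarrow> ('n::finite \<Rightarrow> real^'p) \<Rightarrow> real^'p \<Rightarrow> real" where
  "OPT eps g mu = (INF w\<in>capped_simplex eps. SUP \<rho>\<in>density_matrices. mat_inner (Smat g mu w) \<rho>)"

definition nu :: "('n::finite \<Rightarrow> real^'p) \<Rightarrow> real" where
  "nu g = Max {(norm (g i - g j))\<^sup>2 | i j. True}"

definition rel_ent :: "('n::finite \<Rightarrow> real) \<Rightarrow> ('n \<Rightarrow> real) \<Rightarrow> real" where
  "rel_ent w v = (\<Sum>n\<in>UNIV. w n * ln (w n / v n))"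

primrec matpow :: "real^'p^'p \<Rightarrow> nat \<Rightarrow> real^'p^'p" where
  "matpow A 0 = mat 1"
| "matpow A (Suc k) = A ** matpow A k"

definition mexp :: "real^'p^'p \<Rightarrow> real^'p^'p" where
  "mexp A = (\<Sum>k. (1 / fact k) *\<^sub>R matpow A k)"

text \<open>Quantities of the MW-MMW rounds, as functions of the weight sequence w (rounds indexed from 1).\<close>
definition S_round :: "('n::finite \<Rightarrow> real^'p) \<Rightarrow> real^'p \<Rightarrow> (nat \<Rightarrow> 'n \<Rightarrow> real) \<Rightarrow> nat \<Rightarrow> real^'p^'p" where
  "S_round g mu w t = Smat g mu (w t)"

definition rho_round :: "('n::finite \<Rightarrow> real^'p) \<Rightarrow> real^'p \<Rightarrow> real \<Rightarrow> (nat \<Rightarrow> 'n \<Rightarrow> real) \<Rightarrow> nat \<Rightarrow> real^'p^'p" where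
  "rho_round g mu eta_rho w t =
     (let E = mexp (eta_rho *\<^sub>R (\<Sum>t'\<in>{1..t}. S_round g mu w t')) in (1 / trace E) *\<^sub>R E)"

definition m_round :: "('n::finite \<Rightarrow> real^'p) \<Rightarrow> real^'p \<Rightarrow> real \<Rightarrow> (nat \<Rightarrow> 'n \<Rightarrow> real) \<Rightarrow> nat \<Rightarrow> 'n \<Rightarrow> real" where
  "m_round g mu eta_rho w t n = (g n - mu) \<bullet> (rho_round g mu eta_rho w t *v (g n - mu))"

definition wtilde_round :: "('n::finite \<Rightarrow> real^'p) \<Rightarrow> real^'p \<Rightarrow> real \<Rightarrow> real \<Rightarrow> (nat \<Rightarrow> 'n \<Rightarrow> real) \<Rightarrow> nat \<Rightarrow> 'n \<Rightarrow> real" where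
  "wtilde_round g mu eta_w eta_rho w t n = w t n * (1 - eta_w * m_round g mu eta_rho w t n)"

definition mw_mmw_run :: "real \<Rightarrow> ('n::finite \<Rightarrow> real^'p) \<Rightarrow> real^'p \<Rightarrow> real \<Rightarrow> real \<Rightarrow> nat \<Rightarrow> (nat \<Rightarrow> 'n \<Rightarrow> real) \<Rightarrow> bool" where
  "mw_mmw_run eps g mu eta_w eta_rho T w \<longleftrightarrow>
     w 1 = (\<lambda>n. 1 / real CARD('n)) \<and>
     (\<forall>t\<in>{1..T}. w (Suc t) \<in> capped_simplex eps \<and>
        (\<forall>v\<in>capped_simplex eps. rel_ent (w (Suc t)) (wtilde_round g mu eta_w eta_rho w t)
                                  \<le> rel_ent v (wtilde_round g mu eta_w eta_rho w t)))"

definition w_bar :: "nat \<Rightarrow> (nat \<Rightarrow> 'n \<Rightarrow> real) \<Rightarrow> 'n \<Rightarrow> real" where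
  "w_bar T w n = (1 / real T) * (\<Sum>t\<in>{1..T}. w t n)"

definition S_bar :: "('n::finite \<Rightarrow> real^'p) \<Rightarrow> real^'p \<Rightarrow> nat \<Rightarrow> (nat \<Rightarrow> 'n \<Rightarrow> real) \<Rightarrow> real^'p^'p" where
  "S_bar g mu T w = (1 / real T) *\<^sub>R (\<Sum>t\<in>{1..T}. S_round g mu w t)"

end

theory Submission
  imports Defs
begin


lemma outer_apply: "outer x y *v v = (y \<bullet> v) *\<^sub>R x"
  by (simp add: outer_def matrix_vector_mult_def vec_eq_iff inner_vec_def sum_distrib_left algebra_simps)

lemma transpose_outer: "transpose (outer x y) = outer y x"
  by (simp add: outer_def transpose_def vec_eq_iff)

lemma trace_outer: "trace (outer x y) = x \<bullet> y"
  by (simp add: outer_def trace_def inner_vec_def)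

lemma trace_sum: "trace (\<Sum>i\<in>I. f i) = (\<Sum>i\<in>I. trace (f i))"
  unfolding trace_def by (simp add: sum_component) (rule sum.swap)

lemma trace_scaleR: "trace (c *\<^sub>R A) = c * trace A"
  unfolding trace_def by (simp add: sum_distrib_left)

lemma transpose_sum: "transpose (\<Sum>i\<in>I. f i) = (\<Sum>i\<in>I. transpose (f i))"
  by (induction I rule: infinite_finite_induct) (auto simp: transpose_def vec_eq_iff)

lemma transpose_diff: "transpose (A - B) = transpose A - transpose (B::real^'a^'a)"
  by (simp add: transpose_def vec_eq_iff)

lemma mat_inner_alt: "mat_inner X Y = (\<Sum>r\<in>UNIV. \<Sum>s\<in>UNIV. X$r$s * Y$r$s)"
  unfolding mat_inner_def trace_def matrix_matrix_mult_def transpose_def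
  by simp (rule sum.swap)

lemma quad_alt: "x \<bullet> (M *v x) = (\<Sum>r\<in>UNIV. \<Sum>s\<in>UNIV. x$r * M$r$s * x$s)"
  unfolding inner_vec_def matrix_vector_mult_def by (simp add: sum_distrib_left mult.assoc)

lemma mat_inner_outer_right: "mat_inner X (outer u u) = u \<bullet> (X *v u)"
  unfolding mat_inner_alt quad_alt outer_def by (simp add: algebra_simps)

lemma mat_inner_outer_left: "mat_inner (outer u u) X = u \<bullet> (X *v u)"
  unfolding mat_inner_alt quad_alt outer_def by (simp add: algebra_simps)

lemma mat_inner_add_left: "mat_inner (X + Z) Y = mat_inner X Y + mat_inner Z Y"
  unfolding mat_inner_alt by (simp add: distrib_right sum.distrib)

lemma mat_inner_add_right: "mat_inner X (Y + Z) = mat_inner X Y + mat_inner X Z"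
  unfolding mat_inner_alt by (simp add: distrib_left sum.distrib)

lemma mat_inner_zero_left: "mat_inner 0 Y = 0"
  unfolding mat_inner_alt by simp

lemma mat_inner_zero_right: "mat_inner X 0 = 0"
  unfolding mat_inner_alt by simp

lemma mat_inner_sum_left: "mat_inner (\<Sum>i\<in>I. f i) Y = (\<Sum>i\<in>I. mat_inner (f i) Y)"
  by (induction I rule: infinite_finite_induct) (auto simp: mat_inner_add_left mat_inner_zero_left)

lemma mat_inner_sum_right: "mat_inner X (\<Sum>i\<in>I. f i) = (\<Sum>i\<in>I. mat_inner X (f i))"
  by (induction I rule: infinite_finite_induct) (auto simp: mat_inner_add_right mat_inner_zero_right)

lemma mat_inner_scaleR_left: "mat_inner (c *\<^sub>R X) Y = c * mat_inner X Y"
  unfolding mat_inner_alt by (simp add: sum_distrib_left mult.assoc)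

lemma mat_inner_scaleR_right: "mat_inner X (c *\<^sub>R Y) = c * mat_inner X Y"
  unfolding mat_inner_alt by (simp add: sum_distrib_left algebra_simps)

lemma mat_inner_diff_left: "mat_inner (X - Z) Y = mat_inner X Y - mat_inner Z Y"
  unfolding mat_inner_alt by (simp add: left_diff_distrib sum_subtractf)

definition ONB :: "('p::finite \<Rightarrow> real^'p) \<Rightarrow> bool" where
  "ONB u \<longleftrightarrow> (\<forall>i j. u i \<bullet> u j = (if i = j then 1 else 0)) \<and> (\<forall>x. (\<forall>i. u i \<bullet> x = 0) \<longrightarrow> x = 0)"

definition specmat :: "('p::finite \<Rightarrow> real^'p) \<Rightarrow> ('p \<Rightarrow> real) \<Rightarrow> real^'p^'p" where
  "specmat u l = (\<Sum>i\<in>UNIV. l i *\<^sub>R outer (u i) (u i))"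

lemma ONB_orth: "ONB u \<Longrightarrow> u i \<bullet> u j = (if i = j then 1 else 0)"
  unfolding ONB_def by blast

lemma sum_delta_inner: "ONB u \<Longrightarrow> (\<Sum>i\<in>UNIV. c i * (u j \<bullet> u i)) = c j"
  by (simp add: ONB_orth if_distrib cong: if_cong)

lemma ONB_expand: assumes "ONB u" shows "x = (\<Sum>i\<in>UNIV. (u i \<bullet> x) *\<^sub>R u i)"
proof -
  let ?y = "x - (\<Sum>i\<in>UNIV. (u i \<bullet> x) *\<^sub>R u i)"
  have "u j \<bullet> ?y = 0" for j
    using sum_delta_inner[OF assms, of "\<lambda>i. u i \<bullet> x" j]
    by (simp add: inner_diff_right inner_sum_right)
  then have "?y = 0" using assms unfolding ONB_def by blast
  then show ?thesis by simp
qed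

lemma parseval: assumes "ONB u" shows "x \<bullet> x = (\<Sum>i\<in>UNIV. (u i \<bullet> x)^2)"
proof -
  have "x \<bullet> x = x \<bullet> (\<Sum>i\<in>UNIV. (u i \<bullet> x) *\<^sub>R u i)" using ONB_expand[OF assms, of x] by simp
  also have "\<dots> = (\<Sum>i\<in>UNIV. (u i \<bullet> x)^2)"
    by (simp add: inner_sum_right power2_eq_square inner_commute)
  finally show ?thesis .
qed

lemma norm_sum_onb: assumes "ONB u" shows "norm (\<Sum>i\<in>UNIV. c i *\<^sub>R u i) ^ 2 = (\<Sum>i\<in>UNIV. (c i)^2)"
proof -
  have "norm (\<Sum>i\<in>UNIV. c i *\<^sub>R u i) ^ 2 = (\<Sum>i\<in>UNIV. c i *\<^sub>R u i) \<bullet> (\<Sum>i\<in>UNIV. c i *\<^sub>R u i)"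
    by (simp add: power2_norm_eq_inner)
  also have "\<dots> = (\<Sum>j\<in>UNIV. (c j *\<^sub>R u j) \<bullet> (\<Sum>i\<in>UNIV. c i *\<^sub>R u i))"
    by (simp add: inner_sum_left)
  also have "\<dots> = (\<Sum>j\<in>UNIV. (c j)^2)"
  proof (rule sum.cong[OF refl])
    fix j
    have "(c j *\<^sub>R u j) \<bullet> (\<Sum>i\<in>UNIV. c i *\<^sub>R u i) = c j * (\<Sum>i\<in>UNIV. c i * (u j \<bullet> u i))"
      by (simp add: inner_sum_right sum_distrib_left algebra_simps)
    then show "(c j *\<^sub>R u j) \<bullet> (\<Sum>i\<in>UNIV. c i *\<^sub>R u i) = (c j)^2"
      using sum_delta_inner[OF assms] by (simp add: power2_eq_square)
  qed
  finally show ?thesis .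
qed

lemma scaleR_matrix_vector: "(c *\<^sub>R A) *v x = c *\<^sub>R (A *v (x::real^'a))"
  by (simp add: vec_eq_iff matrix_vector_mult_def sum_distrib_left mult.assoc)

lemma sum_matrix_vector: "(\<Sum>i\<in>I. f i) *v (x::real^'a) = (\<Sum>i\<in>I. f i *v x)"
  by (induction I rule: infinite_finite_induct) (auto simp: matrix_vector_mult_add_rdistrib)

lemma specmat_apply: "specmat u l *v x = (\<Sum>i\<in>UNIV. (l i * (u i \<bullet> x)) *\<^sub>R u i)"
  unfolding specmat_def by (simp add: sum_matrix_vector scaleR_matrix_vector outer_apply)

lemma specmat_eigen: assumes "ONB u" shows "specmat u l *v u j = l j *\<^sub>R u j"
proof -
  have "specmat u l *v u j = (\<Sum>i\<in>UNIV. (if i = j then l j else 0) *\<^sub>R u i)"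
    unfolding specmat_apply using ONB_orth[OF assms] by (intro sum.cong) (auto simp: inner_commute)
  also have "\<dots> = (\<Sum>i\<in>UNIV. if i = j then l j *\<^sub>R u j else 0)"
    by (intro sum.cong) auto
  also have "\<dots> = l j *\<^sub>R u j" by simp
  finally show ?thesis .
qed

lemma specmat_one: assumes "ONB u" shows "specmat u (\<lambda>_. 1) = mat 1"
  unfolding matrix_eq specmat_apply using ONB_expand[OF assms] by (simp add: matrix_vector_mul_lid)

lemma matpow_specmat: assumes "ONB u" shows "matpow (specmat u l) k = specmat u (\<lambda>i. l i ^ k)"
proof (induction k)
  case 0 then show ?case using specmat_one[OF assms] by simp
next
  case (Suc k)
  show ?case unfolding matrix_eq
  proof
    fix x
    have "matpow (specmat u l) (Suc k) *v x = specmat u l *v (specmat u (\<lambda>i. l i ^ k) *v x)"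
      by (simp add: Suc matrix_vector_mul_assoc)
    also have "\<dots> = (\<Sum>i\<in>UNIV. (l i ^ k * (u i \<bullet> x)) *\<^sub>R (l i *\<^sub>R u i))"
      unfolding specmat_apply[of u "\<lambda>i. l i ^ k"]
      by (simp add: vec.sum matrix_vector_mult_scaleR specmat_eigen[OF assms])
    also have "\<dots> = specmat u (\<lambda>i. l i ^ Suc k) *v x"
      unfolding specmat_apply by (simp add: algebra_simps)
    finally show "matpow (specmat u l) (Suc k) *v x = specmat u (\<lambda>i. l i ^ Suc k) *v x" .
  qed
qed

lemma mexp_specmat: assumes "ONB u" shows "mexp (specmat u l) = specmat u (\<lambda>i. exp (l i))"
proof -
  have "(\<lambda>k. (1 / fact k) *\<^sub>R matpow (specmat u l) k) sums specmat u (\<lambda>i. exp (l i))"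
  proof -
    have "(\<lambda>k. \<Sum>i\<in>UNIV. (l i ^ k /\<^sub>R fact k) *\<^sub>R outer (u i) (u i)) sums specmat u (\<lambda>i. exp (l i))"
      unfolding specmat_def by (intro sums_sum sums_scaleR_left exp_converges)
    moreover have "(1 / fact k) *\<^sub>R matpow (specmat u l) k = (\<Sum>i\<in>UNIV. (l i ^ k /\<^sub>R fact k) *\<^sub>R outer (u i) (u i))" for k
    proof -
      have "(1 / fact k) *\<^sub>R matpow (specmat u l) k = (1 / fact k) *\<^sub>R specmat u (\<lambda>i. l i ^ k)"
        by (simp add: matpow_specmat[OF assms])
      then show ?thesis unfolding specmat_def by (simp add: scaleR_sum_right divide_inverse mult.commute)
    qed
    ultimately show ?thesis by simp
  qed
  then show ?thesis unfolding mexp_def by (rule sums_unique[symmetric])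
qed

lemma trace_specmat: assumes "ONB u" shows "trace (specmat u l) = (\<Sum>i\<in>UNIV. l i)"
  unfolding specmat_def trace_sum trace_scaleR trace_outer using ONB_orth[OF assms] by simp

lemma transpose_specmat: "transpose (specmat u l) = specmat u l"
  unfolding specmat_def transpose_sum transpose_scalar transpose_outer ..

lemma quad_specmat: assumes "ONB u" shows "x \<bullet> (specmat u l *v x) = (\<Sum>i\<in>UNIV. l i * (u i \<bullet> x)^2)"
  unfolding specmat_apply by (simp add: inner_sum_right power2_eq_square inner_commute mult.assoc)

lemma mat_inner_specmat_right: "mat_inner X (specmat u l) = (\<Sum>i\<in>UNIV. l i * (u i \<bullet> (X *v u i)))"
  unfolding specmat_def mat_inner_sum_right mat_inner_scaleR_right mat_inner_outer_right ..



lemma sym_quad: assumes "transpose A = (A::real^'p^'p)" shows "x \<bullet> (A *v y) = y \<bullet> (A *v x)"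
proof -
  have "x \<bullet> (A *v y) = (x v* A) \<bullet> y" by (simp add: dot_lmul_matrix)
  also have "x v* A = A *v x" using vector_transpose_matrix[of x A] assms by simp
  finally show ?thesis by (simp add: inner_commute)
qed

lemma quad_scale: "(c *\<^sub>R x) \<bullet> (A *v (c *\<^sub>R x)) = c^2 * (x \<bullet> ((A::real^'p^'p) *v x))"
  by (simp add: matrix_vector_mult_scaleR power2_eq_square)

lemma quad_zero_lemma:
  fixes c M :: real
  assumes "\<And>t. 2 * t * c \<le> t^2 * M"
  shows "c = 0"
proof -
  define D where "D = \<bar>M\<bar> + 1"
  define t where "t = c / D"
  have pos: "D > 0" unfolding D_def by simp
  have tD: "t * D = c" unfolding t_def using pos by simp
  have "2 * t * c \<le> t^2 * M" by (rule assms)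
  then have "2 * t * c * D^2 \<le> t^2 * M * D^2" by (rule mult_right_mono) simp
  moreover have "2 * t * c * D^2 = 2 * c * c * D" by (simp add: power2_eq_square tD[symmetric] algebra_simps)
  moreover have "t^2 * M * D^2 = c * c * M" by (simp add: power2_eq_square tD[symmetric] algebra_simps)
  ultimately have "2 * c * c * (\<bar>M\<bar> + 1) \<le> c * c * M" unfolding D_def by simp
  then have "c * c * (2 * \<bar>M\<bar> + 2 - M) \<le> 0" by (simp add: algebra_simps)
  moreover have "2 * \<bar>M\<bar> + 2 - M > 0" by linarith
  ultimately have "c * c \<le> 0" by (simp add: mult_le_0_iff)
  then show ?thesis by (simp add: mult_le_0_iff) linarith
qed

lemma eigen_step:
  fixes A :: "real^'p^'p" and S :: "(real^'p) set"
  assumes sym: "transpose A = A" and fin: "finite S" and card: "card S < CARD('p)"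
   and orth: "\<forall>x\<in>S. \<forall>y\<in>S. x \<bullet> y = (if x = y then 1 else 0)"
   and eig: "\<forall>x\<in>S. \<exists>l. A *v x = l *\<^sub>R x"
  shows "\<exists>v l. norm v = 1 \<and> (\<forall>x\<in>S. x \<bullet> v = 0) \<and> A *v v = l *\<^sub>R v"
proof -
  define W where "W = {x. \<forall>s\<in>S. s \<bullet> x = 0}"
  have subW: "subspace W" unfolding W_def subspace_def by (auto simp: inner_add_right)
  have nz: "\<exists>x\<in>W. x \<noteq> 0"
  proof (rule ccontr)
    assume "\<not> (\<exists>x\<in>W. x \<noteq> 0)"
    then have W0: "\<And>x. x \<in> W \<Longrightarrow> x = 0" by blast
    have "x \<in> span S" for x
    proof -
      let ?y = "x - (\<Sum>s\<in>S. (s \<bullet> x) *\<^sub>R s)"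
      have "s' \<bullet> ?y = 0" if "s' \<in> S" for s'
      proof -
        have "(\<Sum>s\<in>S. (s \<bullet> x) * (s' \<bullet> s)) = (\<Sum>s\<in>S. if s = s' then s' \<bullet> x else 0)"
          using orth that by (intro sum.cong) auto
        also have "\<dots> = s' \<bullet> x" using fin that by simp
        finally show ?thesis by (simp add: inner_diff_right inner_sum_right)
      qed
      then have "?y \<in> W" unfolding W_def by blast
      then have "?y = 0" using W0 by blast
      then have "x = (\<Sum>s\<in>S. (s \<bullet> x) *\<^sub>R s)" by simp
      also have "\<dots> \<in> span S" by (intro span_sum span_scale span_base)
      finally show ?thesis .
    qed
    then have "UNIV \<subseteq> span S" by blast
    then have "dim (UNIV :: (real^'p) set) \<le> card S" using dim_le_card fin by blast
    then show False using card by simp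
  qed
  define K where "K = W \<inter> sphere 0 1"
  have compK: "compact K" unfolding K_def
    by (metis Int_commute closed_subspace compact_Int_closed compact_sphere subW)
  from nz obtain x0 where x0: "x0 \<in> W" "x0 \<noteq> 0" by blast
  have "(1 / norm x0) *\<^sub>R x0 \<in> K" unfolding K_def
    using x0 subW by (auto simp: subspace_scale)
  then have Kne: "K \<noteq> {}" by blast
  define q where "q x = x \<bullet> (A *v x)" for x
  have contq: "continuous_on K q" unfolding q_def by (intro continuous_intros)
  obtain v where vK: "v \<in> K" and vmax: "\<And>y. y \<in> K \<Longrightarrow> q y \<le> q v"
    using continuous_attains_sup[OF compK Kne contq] by blast
  have vW: "v \<in> W" and vn: "norm v = 1" using vK unfolding K_def by auto
  have vv: "v \<bullet> v = 1" using vn by (simp add: norm_eq_1)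
  define lam where "lam = q v"
  have claim1: "w \<bullet> (A *v v) = 0" if wW: "w \<in> W" and wv: "w \<bullet> v = 0" for w
  proof -
    define M where "M = lam * (w \<bullet> w) - q w"
    have "2 * t * (w \<bullet> (A *v v)) \<le> t^2 * M" for t
    proof -
      let ?y = "v + t *\<^sub>R w"
      have yW: "?y \<in> W" using vW wW subW by (simp add: subspace_add subspace_scale)
      have ny: "?y \<bullet> ?y = 1 + t^2 * (w \<bullet> w)"
        using vv wv by (simp add: inner_add_left inner_add_right inner_commute power2_eq_square)
      then have nypos: "?y \<bullet> ?y > 0" by (simp add: add_pos_nonneg)
      then have "norm ?y > 0" by simp
      then have "(1 / norm ?y) *\<^sub>R ?y \<in> K" unfolding K_def using yW subW by (auto simp: subspace_scale)
      then have "q ((1 / norm ?y) *\<^sub>R ?y) \<le> lam" using vmax lam_def by blast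
      then have "(1 / norm ?y)^2 * q ?y \<le> lam" unfolding q_def quad_scale .
      moreover have "(norm ?y)^2 = ?y \<bullet> ?y" by (simp add: power2_norm_eq_inner)
      ultimately have "q ?y \<le> lam * (?y \<bullet> ?y)" using nypos
        by (simp add: field_simps power2_eq_square)
      moreover have "q ?y = lam + 2 * t * (w \<bullet> (A *v v)) + t^2 * q w"
        using sym_quad[OF sym, of v w] unfolding q_def lam_def
        by (simp add: inner_add_left inner_add_right matrix_vector_right_distrib matrix_vector_mult_scaleR power2_eq_square algebra_simps)
      ultimately show ?thesis unfolding M_def ny by (simp add: algebra_simps)
    qed
    then show ?thesis by (rule quad_zero_lemma)
  qed
  define r where "r = A *v v - lam *\<^sub>R v"
  have rW: "r \<in> W" unfolding W_def mem_Collect_eq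
  proof
    fix s assume sS: "s \<in> S"
    obtain ls where ls: "A *v s = ls *\<^sub>R s" using eig sS by blast
    have sv: "s \<bullet> v = 0" using vW sS unfolding W_def by blast
    have "s \<bullet> (A *v v) = v \<bullet> (A *v s)" by (rule sym_quad[OF sym])
    also have "\<dots> = 0" using ls sv by (simp add: inner_commute)
    finally show "s \<bullet> r = 0" unfolding r_def using sv by (simp add: inner_diff_right)
  qed
  have rv: "r \<bullet> v = 0" unfolding r_def lam_def q_def using vv by (simp add: inner_diff_left inner_diff_right inner_commute)
  have "r \<bullet> (A *v v) = 0" by (rule claim1[OF rW rv])
  then have "r \<bullet> r = 0" using rv unfolding r_def by (simp add: inner_diff_right)
  then have "A *v v = lam *\<^sub>R v" unfolding r_def by simp
  moreover have "\<forall>x\<in>S. x \<bullet> v = 0" using vW unfolding W_def by blast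
  ultimately show ?thesis using vn by blast
qed

lemma exists_eigenset:
  fixes A :: "real^'p^'p"
  assumes sym: "transpose A = A"
  shows "k \<le> CARD('p) \<Longrightarrow> \<exists>S. finite S \<and> card S = k \<and> (\<forall>x\<in>S. \<forall>y\<in>S. x \<bullet> y = (if x = y then 1 else 0))
           \<and> (\<forall>x\<in>S. \<exists>l. A *v x = l *\<^sub>R x)"
proof (induction k)
  case 0 then show ?case by (intro exI[of _ "{}"]) auto
next
  case (Suc k)
  then obtain S where S: "finite S" "card S = k" "\<forall>x\<in>S. \<forall>y\<in>S. x \<bullet> y = (if x = y then 1 else 0)"
      "\<forall>x\<in>S. \<exists>l. A *v x = l *\<^sub>R x" by auto
  obtain v l where v: "norm v = 1" "\<forall>x\<in>S. x \<bullet> v = 0" "A *v v = l *\<^sub>R v"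
    using eigen_step[OF sym S(1) _ S(3) S(4)] S(2) Suc.prems by force
  have vv: "v \<bullet> v = 1" using v(1) by (simp add: norm_eq_1)
  have vS: "v \<notin> S" using v(2) vv by force
  show ?case
  proof (intro exI[of _ "insert v S"] conjI)
    show "finite (insert v S)" using S by simp
    show "card (insert v S) = Suc k" using S vS by simp
    show "\<forall>x\<in>insert v S. \<forall>y\<in>insert v S. x \<bullet> y = (if x = y then 1 else 0)"
      using S(3) v(2) vv vS by (auto simp: inner_commute)
    show "\<forall>x\<in>insert v S. \<exists>l. A *v x = l *\<^sub>R x" using S(4) v(3) by blast
  qed
qed

lemma spectral:
  fixes A :: "real^'p^'p"
  assumes sym: "transpose A = A"
  shows "\<exists>u l. ONB u \<and> A = specmat u l"
proof -
  obtain S where S: "finite S" "card S = CARD('p)" "\<forall>x\<in>S. \<forall>y\<in>S. x \<bullet> y = (if x = y then 1 else 0)"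
      "\<forall>x\<in>S. \<exists>l. A *v x = l *\<^sub>R x"
    using exists_eigenset[OF sym, of "CARD('p)"] by auto
  obtain f where f: "bij_betw f (UNIV::'p set) S"
    using finite_same_card_bij[of "UNIV::'p set" S] S by auto
  define l where "l i = (SOME c. A *v f i = c *\<^sub>R f i)" for i
  have fS: "f i \<in> S" for i using f by (auto simp: bij_betw_def)
  have eig: "A *v f i = l i *\<^sub>R f i" for i
    unfolding l_def using S(4) fS[of i] by (metis (mono_tags) someI)
  have inj: "f i = f j \<Longrightarrow> i = j" for i j using f by (auto simp: bij_betw_def inj_def)
  have orthf: "f i \<bullet> f j = (if i = j then 1 else 0)" for i j
    using S(3) fS[of i] fS[of j] inj[of i j] by auto
  have compl: "x = 0" if x: "\<forall>i. f i \<bullet> x = 0" for x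
  proof (rule ccontr)
    assume xn: "x \<noteq> 0"
    define y where "y = (1 / norm x) *\<^sub>R x"
    have "norm y = 1" unfolding y_def using xn by simp
    then have yy: "y \<bullet> y = 1" by (simp add: norm_eq_1)
    have sy: "s \<bullet> y = 0" if sS: "s \<in> S" for s
    proof -
      obtain i where "s = f i" using f sS unfolding bij_betw_def by blast
      then show ?thesis unfolding y_def using x by simp
    qed
    have yS: "y \<notin> S" using sy yy by force
    have "pairwise orthogonal (insert y S)"
      unfolding pairwise_def orthogonal_def using S(3) sy yy by (auto simp: inner_commute)
    moreover have "0 \<notin> insert y S" using yy S(3) by force
    ultimately have "independent (insert y S)" by (rule pairwise_orthogonal_independent)
    then have "card (insert y S) \<le> DIM(real^'p)" using independent_bound by blast
    then show False using yS S by simp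
  qed
  have onb: "ONB f" unfolding ONB_def using orthf compl by blast
  have "A = specmat f l" unfolding matrix_eq
  proof
    fix x
    have "A *v x = A *v (\<Sum>i\<in>UNIV. (f i \<bullet> x) *\<^sub>R f i)" using ONB_expand[OF onb, of x] by simp
    also have "\<dots> = specmat f l *v x" unfolding specmat_apply
      by (simp add: vec.sum matrix_vector_mult_scaleR eig mult.commute)
    finally show "A *v x = specmat f l *v x" .
  qed
  then show ?thesis using onb by blast
qed



lemma scaleR_specmat: "c *\<^sub>R specmat u l = specmat u (\<lambda>i. c * l i)"
  by (simp add: specmat_def scaleR_sum_right)

lemma mat_inner_comm: "mat_inner X Y = mat_inner Y X"
  unfolding mat_inner_alt by (simp add: mult.commute)

lemma quad_transpose: "x \<bullet> (transpose M *v x) = x \<bullet> ((M::real^'p^'p) *v x)"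
proof -
  have "x \<bullet> (M *v x) = (x v* M) \<bullet> x" by (simp add: dot_lmul_matrix)
  also have "x v* M = transpose M *v x"
    using vector_transpose_matrix[of x "transpose M"] by simp
  finally show ?thesis by (simp add: inner_commute)
qed

lemma trace_onb: assumes "ONB u" shows "trace M = (\<Sum>i\<in>UNIV. u i \<bullet> (M *v u i))"
proof -
  have "trace M = mat_inner (mat 1) M"
    unfolding mat_inner_def by (simp add: transpose_mat matrix_mul_lid)
  also have "\<dots> = mat_inner M (specmat u (\<lambda>_. 1))" using specmat_one[OF assms] mat_inner_comm by metis
  also have "\<dots> = (\<Sum>i\<in>UNIV. u i \<bullet> (M *v u i))" unfolding mat_inner_specmat_right by simp
  finally show ?thesis .
qed

lemma specmat_density:
  assumes u: "ONB u" and l: "\<And>i. 0 \<le> l i" and s: "(\<Sum>i\<in>UNIV. l i) = 1"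
  shows "specmat u l \<in> density_matrices"
  unfolding density_matrices_def
  using transpose_specmat[of u l] quad_specmat[OF u, of _ l] trace_specmat[OF u, of l] s l
  by (auto intro!: sum_nonneg)

lemma density_quad:
  assumes rho: "\<rho> \<in> density_matrices"
  shows "0 \<le> z \<bullet> (\<rho> *v z) \<and> z \<bullet> (\<rho> *v z) \<le> z \<bullet> z"
proof -
  have sym: "transpose \<rho> = \<rho>" and psd: "\<And>x. 0 \<le> x \<bullet> (\<rho> *v x)" and tr: "trace \<rho> = 1"
    using rho unfolding density_matrices_def by auto
  obtain u l where u: "ONB u" and r: "\<rho> = specmat u l" using spectral[OF sym] by blast
  have lnn: "0 \<le> l i" for i using psd[of "u i"] unfolding r specmat_eigen[OF u] using ONB_orth[OF u, of i i] by simp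
  have ls: "(\<Sum>i\<in>UNIV. l i) = 1" using tr unfolding r trace_specmat[OF u] .
  have l1: "l i \<le> 1" for i
  proof -
    have "l i \<le> (\<Sum>i\<in>UNIV. l i)" by (rule member_le_sum) (auto simp: lnn)
    then show ?thesis using ls by simp
  qed
  have "z \<bullet> (\<rho> *v z) = (\<Sum>i\<in>UNIV. l i * (u i \<bullet> z)^2)" unfolding r by (rule quad_specmat[OF u])
  moreover have "(\<Sum>i\<in>UNIV. l i * (u i \<bullet> z)^2) \<le> (\<Sum>i\<in>UNIV. (u i \<bullet> z)^2)"
    by (intro sum_mono mult_left_le_one_le) (auto simp: lnn l1)
  moreover have "0 \<le> (\<Sum>i\<in>UNIV. l i * (u i \<bullet> z)^2)" by (intro sum_nonneg) (simp add: lnn)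
  ultimately show ?thesis using parseval[OF u, of z] by simp
qed

lemma exp_jensen:
  fixes p x :: "'i \<Rightarrow> real"
  assumes fin: "finite I" and p: "\<And>i. i \<in> I \<Longrightarrow> 0 \<le> p i" and s: "(\<Sum>i\<in>I. p i) = 1"
  shows "exp (\<Sum>i\<in>I. p i * x i) \<le> (\<Sum>i\<in>I. p i * exp (x i))"
proof -
  define m where "m = (\<Sum>i\<in>I. p i * x i)"
  have "p i * (exp m * (1 + (x i - m))) \<le> p i * exp (x i)" if "i \<in> I" for i
  proof -
    have "exp (x i - m) \<ge> 1 + (x i - m)" by (rule exp_ge_add_one_self)
    then have "exp m * (1 + (x i - m)) \<le> exp m * exp (x i - m)" by simp
    also have "\<dots> = exp (x i)" by (simp add: exp_diff)
    finally show ?thesis using p[OF that] by (rule mult_left_mono)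
  qed
  then have "(\<Sum>i\<in>I. p i * (exp m * (1 + (x i - m)))) \<le> (\<Sum>i\<in>I. p i * exp (x i))"
    by (rule sum_mono)
  moreover have "(\<Sum>i\<in>I. p i * (exp m * (1 + (x i - m)))) = exp m * ((\<Sum>i\<in>I. p i) + (\<Sum>i\<in>I. p i * x i) - m * (\<Sum>i\<in>I. p i))"
    by (simp add: algebra_simps sum.distrib sum_subtractf sum_distrib_left sum_distrib_right)
  moreover have "\<dots> = exp m" using s unfolding m_def by simp
  ultimately show ?thesis unfolding m_def by simp
qed

lemma peierls:
  assumes v: "ONB v" and uu: "x \<bullet> x = 1"
  shows "exp (x \<bullet> (specmat v mu *v x)) \<le> x \<bullet> (specmat v (\<lambda>j. exp (mu j)) *v x)"
proof -
  have s: "(\<Sum>j\<in>UNIV. (v j \<bullet> x)^2) = 1" using parseval[OF v, of x] uu by simp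
  have "exp (\<Sum>j\<in>UNIV. (v j \<bullet> x)^2 * mu j) \<le> (\<Sum>j\<in>UNIV. (v j \<bullet> x)^2 * exp (mu j))"
    by (rule exp_jensen) (use s in auto)
  then show ?thesis unfolding quad_specmat[OF v] by (simp add: mult.commute)
qed

lemma gibbs:
  fixes A B :: "real^'p^'p"
  assumes symA: "transpose A = A" and symB: "transpose B = B"
  shows "ln (trace (mexp B)) \<ge> ln (trace (mexp A)) + mat_inner (B - A) ((1 / trace (mexp A)) *\<^sub>R mexp A)"
proof -
  obtain u lam where u: "ONB u" and A: "A = specmat u lam" using spectral[OF symA] by blast
  obtain v mu where v: "ONB v" and B: "B = specmat v mu" using spectral[OF symB] by blast
  define Z where "Z = (\<Sum>i\<in>UNIV. exp (lam i))"
  have Zpos: "Z > 0" unfolding Z_def by (intro sum_pos) auto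
  have trA: "trace (mexp A) = Z" unfolding A mexp_specmat[OF u] trace_specmat[OF u] Z_def ..
  define p where "p i = exp (lam i) / Z" for i
  have rho: "(1 / trace (mexp A)) *\<^sub>R mexp A = specmat u p"
    unfolding trA unfolding A mexp_specmat[OF u] scaleR_specmat p_def by simp
  define b where "b i = u i \<bullet> (B *v u i)" for i
  have lami: "u i \<bullet> (A *v u i) = lam i" for i
    unfolding A specmat_eigen[OF u] using ONB_orth[OF u, of i i] by simp
  have inner: "mat_inner (B - A) (specmat u p) = (\<Sum>i\<in>UNIV. p i * (b i - lam i))"
    unfolding mat_inner_specmat_right b_def
    by (simp add: matrix_vector_mult_diff_rdistrib inner_diff_right lami)
  have pnn: "0 \<le> p i" for i unfolding p_def using Zpos by simp
  have psum: "(\<Sum>i\<in>UNIV. p i) = 1" unfolding p_def using Zpos by (simp add: sum_divide_distrib[symmetric] Z_def)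
  have "exp (\<Sum>i\<in>UNIV. p i * (b i - lam i)) \<le> (\<Sum>i\<in>UNIV. p i * exp (b i - lam i))"
    by (rule exp_jensen) (auto simp: pnn psum)
  also have "\<dots> = (\<Sum>i\<in>UNIV. exp (b i)) / Z"
    unfolding p_def using Zpos by (simp add: exp_diff sum_divide_distrib)
  also have "\<dots> \<le> trace (mexp B) / Z"
  proof -
    have "exp (b i) \<le> u i \<bullet> (mexp B *v u i)" for i
      unfolding b_def B mexp_specmat[OF v] by (rule peierls[OF v]) (use ONB_orth[OF u, of i i] in simp)
    then have "(\<Sum>i\<in>UNIV. exp (b i)) \<le> trace (mexp B)" unfolding trace_onb[OF u, of "mexp B"]
      by (rule sum_mono)
    then show ?thesis using Zpos by (simp add: divide_right_mono)
  qed
  finally have "exp (\<Sum>i\<in>UNIV. p i * (b i - lam i)) \<le> trace (mexp B) / Z" .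
  then have "(\<Sum>i\<in>UNIV. p i * (b i - lam i)) \<le> ln (trace (mexp B) / Z)"
    using Zpos by (metis exp_gt_zero exp_le_cancel_iff less_le_trans ln_exp order_refl ln_le_cancel_iff)
  also have "\<dots> = ln (trace (mexp B)) - ln Z"
  proof -
    have "trace (mexp B) > 0" unfolding B mexp_specmat[OF v] trace_specmat[OF v] by (intro sum_pos) auto
    then show ?thesis using Zpos by (simp add: ln_div)
  qed
  finally have fin: "(\<Sum>i\<in>UNIV. p i * (b i - lam i)) \<le> ln (trace (mexp B)) - ln Z" .
  have e1: "mat_inner (B - A) ((1 / trace (mexp A)) *\<^sub>R mexp A) = (\<Sum>i\<in>UNIV. p i * (b i - lam i))"
    unfolding rho inner ..
  have e2: "ln (trace (mexp A)) = ln Z" unfolding trA ..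
  show ?thesis using fin e1 e2 by linarith
qed

lemma op_norm_specmat:
  assumes u: "ONB u" and L: "\<And>i. \<bar>l i\<bar> \<le> L"
  shows "op_norm (specmat u l) \<le> L"
  unfolding op_norm_def
proof (rule onorm_le)
  fix x
  have L0: "0 \<le> L" using L[of undefined] by simp
  have "norm (specmat u l *v x) ^ 2 = (\<Sum>i\<in>UNIV. (l i * (u i \<bullet> x))^2)"
    unfolding specmat_apply by (rule norm_sum_onb[OF u])
  also have "\<dots> \<le> (\<Sum>i\<in>UNIV. L^2 * (u i \<bullet> x)^2)"
  proof (rule sum_mono)
    fix i
    have "(l i)^2 \<le> L^2" using power_mono[OF L[of i] abs_ge_zero, of 2] by simp
    then show "(l i * (u i \<bullet> x))^2 \<le> L^2 * (u i \<bullet> x)^2" by (simp add: power_mult_distrib mult_right_mono)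
  qed
  also have "\<dots> = L^2 * (\<Sum>i\<in>UNIV. (u i \<bullet> x)^2)" by (simp add: sum_distrib_left)
  also have "\<dots> = L^2 * (x \<bullet> x)" using parseval[OF u, of x] by simp
  also have "\<dots> = (L * norm x)^2" by (simp only: power_mult_distrib power2_norm_eq_inner)
  finally have sq: "norm (specmat u l *v x) ^ 2 \<le> (L * norm x)^2" .
  show "norm (specmat u l *v x) \<le> L * norm x"
    by (rule power2_le_imp_le[OF sq]) (simp add: L0)
qed



lemma ln_tendsto_aux:
  fixes a b c :: real
  assumes "a > 0" "c > 0"
  shows "((\<lambda>s. ln ((a + s * b) / c)) \<longlongrightarrow> ln (a / c)) (at_right 0)"
proof -
  have "((\<lambda>s. (a + s * b) / c) \<longlongrightarrow> (a + 0 * b) / c) (at_right 0)"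
    by (intro tendsto_intros) (use assms in auto)
  then have "((\<lambda>s. (a + s * b) / c) \<longlongrightarrow> a / c) (at_right 0)" by simp
  then show ?thesis by (rule tendsto_ln) (use assms in auto)
qed

lemma uniform_in_C:
  assumes "0 \<le> eps" "eps < 1"
  shows "(\<lambda>n::'n::finite. 1 / real CARD('n)) \<in> capped_simplex eps"
proof -
  have N: "real CARD('n) > 0" by simp
  have "(1 - eps) * real CARD('n) \<le> real CARD('n)" using assms N by (simp add: mult_left_le_one_le)
  moreover have "(1 - eps) * real CARD('n) > 0" using assms N by simp
  ultimately have "1 / real CARD('n) \<le> 1 / ((1 - eps) * real CARD('n))"
    by (intro divide_left_mono) auto
  then show ?thesis unfolding capped_simplex_def by auto
qed

lemma C_convex:
  assumes u: "u \<in> capped_simplex eps" and v: "v \<in> capped_simplex eps" and s: "0 \<le> s" "s \<le> 1"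
  shows "(\<lambda>n. v n + s * (u n - v n)) \<in> capped_simplex eps"
proof -
  have su: "(\<Sum>n\<in>UNIV. u n) = 1" and sv: "(\<Sum>n\<in>UNIV. v n) = 1" using u v unfolding capped_simplex_def by auto
  have e1: "(\<Sum>n\<in>UNIV. s * (u n - v n)) = s * (\<Sum>n\<in>UNIV. (u n - v n))" by (simp add: sum_distrib_left)
  have e2: "(\<Sum>n\<in>UNIV. (u n - v n)) = (\<Sum>n\<in>UNIV. u n) - (\<Sum>n\<in>UNIV. v n)" by (simp add: sum_subtractf)
  have "(\<Sum>n\<in>UNIV. v n + s * (u n - v n)) = (\<Sum>n\<in>UNIV. v n) + s * ((\<Sum>n\<in>UNIV. u n) - (\<Sum>n\<in>UNIV. v n))"
    by (simp only: sum.distrib e1 e2)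
  then have sum1: "(\<Sum>n\<in>UNIV. v n + s * (u n - v n)) = 1" using su sv by simp
  have "0 \<le> v n + s * (u n - v n) \<and> v n + s * (u n - v n) \<le> 1 / ((1 - eps) * real CARD('a))" for n
  proof -
    define B where "B = 1 / ((1 - eps) * real CARD('a))"
    have h: "0 \<le> u n" "u n \<le> B" "0 \<le> v n" "v n \<le> B"
      using u v unfolding capped_simplex_def B_def by auto
    have eq: "v n + s * (u n - v n) = (1 - s) * v n + s * u n" by (simp add: algebra_simps)
    have a1: "0 \<le> (1 - s) * v n" "0 \<le> s * u n" using h s by auto
    have a2: "(1 - s) * v n \<le> (1 - s) * B" "s * u n \<le> s * B" using h s by (auto intro: mult_left_mono)
    have "(1 - s) * B + s * B = B" by (simp add: algebra_simps)
    then show ?thesis unfolding eq B_def[symmetric] using a1 a2 by linarith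
  qed
  then show ?thesis using sum1 unfolding capped_simplex_def by auto
qed

lemma phi_ineq:
  fixes a b c :: real
  assumes "a > 0" "b \<ge> 0" "c > 0"
  shows "a * ln (a / c) - b * ln (b / c) \<le> (a - b) * (ln (a / c) + 1)"
proof (cases "b = 0")
  case True then show ?thesis using assms by simp
next
  case False
  then have b: "b > 0" using assms by simp
  have "ln (a / b) \<le> a / b - 1" using assms b by (intro ln_le_minus_one) simp
  then have "b * ln (a / b) \<le> a - b" using b by (simp add: field_simps)
  moreover have "ln (a / b) = ln (a / c) - ln (b / c)" using assms b by (simp add: ln_div)
  ultimately show ?thesis by (simp add: algebra_simps)
qed

lemma rel_ent_ge_sum:
  assumes "\<And>n. 0 \<le> x n" "\<And>n. c n > 0"
  shows "rel_ent x c \<ge> (\<Sum>n\<in>UNIV. x n - c n)"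
  unfolding rel_ent_def
proof (rule sum_mono)
  fix n
  show "x n - c n \<le> x n * ln (x n / c n)"
  proof (cases "x n = 0")
    case True then show ?thesis using assms(2)[of n] by simp
  next
    case False
    then have xp: "x n > 0" using assms(1)[of n] by simp
    have "ln (c n / x n) \<le> c n / x n - 1" using xp assms(2)[of n] by (intro ln_le_minus_one) simp
    moreover have "ln (c n / x n) = - ln (x n / c n)" using xp assms(2)[of n] by (simp add: ln_div)
    ultimately have "- ln (x n / c n) \<le> c n / x n - 1" by simp
    then have "x n * (- ln (x n / c n)) \<le> x n * (c n / x n - 1)" using xp by (intro mult_left_mono) auto
    then show ?thesis using xp by (simp add: algebra_simps)
  qed
qed

lemma dir_deriv:
  assumes opt: "\<forall>v\<in>capped_simplex eps. rel_ent w' c \<le> rel_ent v c"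
    and u: "u \<in> capped_simplex eps" and w': "w' \<in> capped_simplex eps"
    and cpos: "\<And>n. c n > 0" and s: "0 < s" "s \<le> 1"
    and xpos: "\<And>n. w' n + s * (u n - w' n) > 0"
  shows "(\<Sum>n\<in>UNIV. (u n - w' n) * ln ((w' n + s * (u n - w' n)) / c n)) \<ge> 0"
proof -
  define x where "x n = w' n + s * (u n - w' n)" for n
  have xC: "x \<in> capped_simplex eps" unfolding x_def using C_convex[OF u w' less_imp_le[OF s(1)] s(2)] .
  have w'nn: "0 \<le> w' n" for n using w' unfolding capped_simplex_def by auto
  have f1: "rel_ent w' c \<le> rel_ent x c" using opt xC by blast
  have f2: "rel_ent x c - rel_ent w' c \<le> (\<Sum>n\<in>UNIV. (x n - w' n) * (ln (x n / c n) + 1))"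
    unfolding rel_ent_def sum_subtractf[symmetric]
    by (intro sum_mono phi_ineq) (use xpos[unfolded x_def[symmetric]] w'nn cpos in auto)
  have su: "(\<Sum>n\<in>UNIV. u n) = 1" and sw: "(\<Sum>n\<in>UNIV. w' n) = 1" using u w' unfolding capped_simplex_def by auto
  have xd: "x n - w' n = s * (u n - w' n)" for n unfolding x_def by simp
  have "(\<Sum>n\<in>UNIV. (x n - w' n) * (ln (x n / c n) + 1)) = (\<Sum>n\<in>UNIV. s * ((u n - w' n) * ln (x n / c n)) + s * (u n - w' n))"
    unfolding xd by (intro sum.cong refl) (simp add: distrib_left mult.assoc)
  also have "\<dots> = s * (\<Sum>n\<in>UNIV. (u n - w' n) * ln (x n / c n)) + s * ((\<Sum>n\<in>UNIV. u n) - (\<Sum>n\<in>UNIV. w' n))"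
    by (simp only: sum.distrib sum_distrib_left[symmetric] sum_subtractf)
  also have "\<dots> = s * (\<Sum>n\<in>UNIV. (u n - w' n) * ln (x n / c n))" using su sw by simp
  finally have f3: "(\<Sum>n\<in>UNIV. (x n - w' n) * (ln (x n / c n) + 1)) = s * (\<Sum>n\<in>UNIV. (u n - w' n) * ln (x n / c n))" .
  have "0 \<le> s * (\<Sum>n\<in>UNIV. (u n - w' n) * ln (x n / c n))" using f1 f2 f3 by linarith
  then show ?thesis using s unfolding x_def by (simp add: zero_le_mult_iff)
qed

lemma kl_proj_pos:
  fixes w' c :: "'n::finite \<Rightarrow> real"
  assumes eps: "0 \<le> eps" "eps < 1" and cpos: "\<And>n. c n > 0"
    and w': "w' \<in> capped_simplex eps" and opt: "\<forall>v\<in>capped_simplex eps. rel_ent w' c \<le> rel_ent v c"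
  shows "w' n > 0"
proof (rule ccontr)
  assume "\<not> w' n > 0"
  moreover have "0 \<le> w' n" using w' unfolding capped_simplex_def by auto
  ultimately have wn0: "w' n = 0" by simp
  define u0 where "u0 = 1 / real CARD('n)"
  have u0pos: "u0 > 0" unfolding u0_def by simp
  have u0C: "(\<lambda>_::'n. u0) \<in> capped_simplex eps" using uniform_in_C[OF eps, where 'n='n] by (simp add: u0_def)
  have w'nn: "0 \<le> w' k" for k using w' unfolding capped_simplex_def by auto
  define D where "D s = (\<Sum>k\<in>UNIV. (u0 - w' k) * ln ((w' k + s * (u0 - w' k)) / c k))" for s
  define G where "G s = (\<Sum>k\<in>UNIV. if w' k = 0 then u0 * ln (u0 / c k) else (u0 - w' k) * ln ((w' k + s * (u0 - w' k)) / c k))" for s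
  define K where "K = (\<Sum>k\<in>UNIV. if w' k = 0 then u0 else 0)"
  have Kpos: "K > 0"
  proof -
    have "K \<ge> (if w' n = 0 then u0 else 0)" unfolding K_def by (rule member_le_sum) (auto simp: u0pos less_imp_le)
    then show ?thesis using wn0 u0pos by simp
  qed
  have DG: "D s = G s + K * ln s" if "s > 0" for s
  proof -
    have "D s = (\<Sum>k\<in>UNIV. (if w' k = 0 then u0 * ln (u0 / c k) else (u0 - w' k) * ln ((w' k + s * (u0 - w' k)) / c k)) + (if w' k = 0 then u0 else 0) * ln s)"
      unfolding D_def
    proof (rule sum.cong[OF refl])
      fix k
      show "(u0 - w' k) * ln ((w' k + s * (u0 - w' k)) / c k) = (if w' k = 0 then u0 * ln (u0 / c k) else (u0 - w' k) * ln ((w' k + s * (u0 - w' k)) / c k)) + (if w' k = 0 then u0 else 0) * ln s"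
      proof (cases "w' k = 0")
        case True
        have "ln (s * u0 / c k) = ln s + ln (u0 / c k)" using that u0pos cpos[of k] by (simp add: ln_div ln_mult)
        then show ?thesis using True by (simp add: algebra_simps)
      qed simp
    qed
    then show ?thesis unfolding G_def K_def by (simp add: sum.distrib sum_distrib_right)
  qed
  have Gt: "(G \<longlongrightarrow> G 0) (at_right 0)"
    unfolding G_def
  proof (intro tendsto_sum)
    fix k
    show "((\<lambda>s. if w' k = 0 then u0 * ln (u0 / c k) else (u0 - w' k) * ln ((w' k + s * (u0 - w' k)) / c k)) \<longlongrightarrow>
       (if w' k = 0 then u0 * ln (u0 / c k) else (u0 - w' k) * ln ((w' k + 0 * (u0 - w' k)) / c k))) (at_right 0)"
    proof (cases "w' k = 0")
      case False
      then have "w' k > 0" using w'nn[of k] by simp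
      then show ?thesis using False by (simp add: tendsto_mult_left ln_tendsto_aux cpos)
    qed simp
  qed
  have "eventually (\<lambda>s. G s < G 0 + 1) (at_right 0)" using order_tendstoD(2)[OF Gt] by simp
  then have ev1: "eventually (\<lambda>s. G s \<le> G 0 + 1) (at_right 0)" by (rule eventually_mono) simp
  have "\<forall>Z. eventually (\<lambda>s. ln s \<le> Z) (at_right (0::real))" using ln_at_0 filterlim_at_bot by blast
  then have ev2: "eventually (\<lambda>s. ln s \<le> - (G 0 + 2) / K) (at_right 0)" by blast
  have ev3: "eventually (\<lambda>s. s \<in> {0<..<1::real}) (at_right 0)" by (rule eventually_at_right_real) simp
  have "eventually (\<lambda>s. False) (at_right (0::real))"
    using ev1 ev2 ev3
  proof eventually_elim
    case (elim s)
    then have s: "0 < s" "s < 1" by auto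
    have xpos: "w' k + s * (u0 - w' k) > 0" for k
    proof -
      have "w' k + s * (u0 - w' k) = (1 - s) * w' k + s * u0" by (simp add: algebra_simps)
      moreover have "(1 - s) * w' k \<ge> 0" using s w'nn[of k] by simp
      moreover have "s * u0 > 0" using s u0pos by simp
      ultimately show ?thesis by linarith
    qed
    have "D s \<ge> 0" unfolding D_def using dir_deriv[OF opt u0C w' cpos, of s] s xpos by simp
    moreover have "K * ln s \<le> K * (- (G 0 + 2) / K)" using elim Kpos by (intro mult_left_mono) auto
    then have "K * ln s \<le> - (G 0 + 2)" using Kpos by simp
    ultimately show False using DG[OF s(1)] elim by linarith
  qed
  then show False by (simp add: trivial_limit_at_right_real)
qed

lemma kl_pythag:
  fixes w' c :: "'n::finite \<Rightarrow> real"
  assumes eps: "0 \<le> eps" "eps < 1" and cpos: "\<And>n. c n > 0"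
    and w': "w' \<in> capped_simplex eps" and opt: "\<forall>v\<in>capped_simplex eps. rel_ent w' c \<le> rel_ent v c"
    and u: "u \<in> capped_simplex eps"
  shows "rel_ent u w' + rel_ent w' c \<le> rel_ent u c"
proof -
  have wpos: "w' n > 0" for n by (rule kl_proj_pos[OF eps cpos w' opt])
  have unn: "0 \<le> u n" for n using u unfolding capped_simplex_def by auto
  define D where "D s = (\<Sum>n\<in>UNIV. (u n - w' n) * ln ((w' n + s * (u n - w' n)) / c n))" for s
  have Dt: "(D \<longlongrightarrow> (\<Sum>n\<in>UNIV. (u n - w' n) * ln (w' n / c n))) (at_right 0)"
    unfolding D_def by (intro tendsto_sum tendsto_mult_left ln_tendsto_aux wpos cpos)
  have ev3: "eventually (\<lambda>s. s \<in> {0<..<1::real}) (at_right 0)" by (rule eventually_at_right_real) simp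
  have "eventually (\<lambda>s. 0 \<le> D s) (at_right 0)"
    using ev3
  proof eventually_elim
    case (elim s)
    then have s: "0 < s" "s < 1" by auto
    have xpos: "w' k + s * (u k - w' k) > 0" for k
    proof -
      have "w' k + s * (u k - w' k) = (1 - s) * w' k + s * u k" by (simp add: algebra_simps)
      moreover have "(1 - s) * w' k > 0" using s wpos[of k] by simp
      moreover have "s * u k \<ge> 0" using s unn[of k] by simp
      ultimately show ?thesis by linarith
    qed
    show ?case unfolding D_def using dir_deriv[OF opt u w' cpos, of s] s xpos by simp
  qed
  then have D0: "0 \<le> (\<Sum>n\<in>UNIV. (u n - w' n) * ln (w' n / c n))"
    by (intro tendsto_lowerbound[OF Dt]) (simp_all add: trivial_limit_at_right_real)
  have eq: "rel_ent u c = rel_ent u w' + rel_ent w' c + (\<Sum>n\<in>UNIV. (u n - w' n) * ln (w' n / c n))"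
    unfolding rel_ent_def sum.distrib[symmetric]
  proof (rule sum.cong[OF refl])
    fix n
    show "u n * ln (u n / c n) = u n * ln (u n / w' n) + w' n * ln (w' n / c n) + (u n - w' n) * ln (w' n / c n)"
    proof (cases "u n = 0")
      case False
      then have "u n > 0" using unn[of n] by simp
      then have "ln (u n / c n) = ln (u n / w' n) + ln (w' n / c n)"
        using wpos[of n] cpos[of n] by (simp add: ln_div)
      then show ?thesis by (simp add: algebra_simps)
    qed (simp add: algebra_simps)
  qed
  show ?thesis
    by (rule ord_le_eq_trans[OF _ eq[symmetric]]) (rule le_add_same_cancel1[THEN iffD2, OF D0])
qed



lemma neg_ln_bound:
  fixes x :: real
  assumes "0 \<le> x" "x \<le> 1/2"
  shows "- ln (1 - x) \<le> x + x^2"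
proof -
  define g where "g y = y + y^2 + ln (1 - y)" for y :: real
  have "g 0 \<le> g x"
  proof (rule deriv_nonneg_imp_mono[where g=g and g' = "\<lambda>y. 1 + 2 * y - 1 / (1 - y)" and a=0 and b=x])
    fix y assume y: "y \<in> {0..x}"
    then have y1: "y < 1" using assms by auto
    show "(g has_real_derivative 1 + 2 * y - 1 / (1 - y)) (at y)"
      unfolding g_def using y1
      by (auto intro!: derivative_eq_intros simp: field_simps power2_eq_square)
    have "1 + 2 * y - 1 / (1 - y) = y * (1 - 2 * y) / (1 - y)" using y1 by (simp add: field_simps)
    moreover have "y * (1 - 2 * y) \<ge> 0" using y assms by auto
    ultimately show "0 \<le> 1 + 2 * y - 1 / (1 - y)" using y1 by simp
  qed (use assms in auto)
  then show ?thesis unfolding g_def by simp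
qed

lemma telescope_le:
  fixes K a b :: "nat \<Rightarrow> real"
  assumes "\<And>t. t \<in> {1..T} \<Longrightarrow> K (Suc t) \<le> K t + a t - b t"
  shows "K (Suc T) \<le> K 1 + (\<Sum>t\<in>{1..T}. a t) - (\<Sum>t\<in>{1..T}. b t)"
  using assms
proof (induction T)
  case 0 then show ?case by simp
next
  case (Suc T)
  have "K (Suc T) \<le> K 1 + (\<Sum>t\<in>{1..T}. a t) - (\<Sum>t\<in>{1..T}. b t)" using Suc by auto
  moreover have "K (Suc (Suc T)) \<le> K (Suc T) + a (Suc T) - b (Suc T)" using Suc.prems[of "Suc T"] by simp
  ultimately show ?case by simp
qed

lemma mw_step:
  fixes w w' u m :: "'n::finite \<Rightarrow> real"
  assumes eps: "0 \<le> eps" "eps < 1"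
    and wC: "w \<in> capped_simplex eps" and wpos: "\<And>n. w n > 0"
    and m: "\<And>n. 0 \<le> m n" "\<And>n. m n \<le> nu0" and eta: "eta > 0" "eta * nu0 \<le> 1/2"
    and w'C: "w' \<in> capped_simplex eps"
    and opt: "\<forall>v\<in>capped_simplex eps. rel_ent w' (\<lambda>n. w n * (1 - eta * m n)) \<le> rel_ent v (\<lambda>n. w n * (1 - eta * m n))"
    and u: "u \<in> capped_simplex eps"
  shows "rel_ent u w' \<le> rel_ent u w + eta * (1 + eta * nu0) * (\<Sum>n\<in>UNIV. u n * m n) - eta * (\<Sum>n\<in>UNIV. w n * m n)"
proof -
  define c where "c n = w n * (1 - eta * m n)" for n
  have em: "eta * m n \<le> eta * nu0" for n using m(2)[of n] eta by (intro mult_left_mono) auto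
  have em0: "0 \<le> eta * m n" for n using m(1)[of n] eta by simp
  have em1: "1 - eta * m n > 0" for n using em[of n] eta by linarith
  have cpos: "c n > 0" for n unfolding c_def using wpos[of n] em1[of n] by simp
  have opt': "\<forall>v\<in>capped_simplex eps. rel_ent w' c \<le> rel_ent v c" using opt unfolding c_def .
  have pyth: "rel_ent u w' + rel_ent w' c \<le> rel_ent u c"
    by (rule kl_pythag[OF eps _ w'C opt' u]) (rule cpos)
  have w'nn: "0 \<le> w' n" for n using w'C unfolding capped_simplex_def by auto
  have sw: "(\<Sum>n\<in>UNIV. w n) = 1" and sw': "(\<Sum>n\<in>UNIV. w' n) = 1" using wC w'C unfolding capped_simplex_def by auto
  have unn: "0 \<le> u n" for n using u unfolding capped_simplex_def by auto
  have "rel_ent w' c \<ge> (\<Sum>n\<in>UNIV. w' n - c n)" by (rule rel_ent_ge_sum[OF w'nn cpos])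
  also have "(\<Sum>n\<in>UNIV. w' n - c n) = (\<Sum>n\<in>UNIV. w' n) - (\<Sum>n\<in>UNIV. w n) + eta * (\<Sum>n\<in>UNIV. w n * m n)"
    unfolding c_def by (simp add: sum_subtractf sum_distrib_left algebra_simps sum.distrib)
  finally have ge: "rel_ent w' c \<ge> eta * (\<Sum>n\<in>UNIV. w n * m n)" using sw sw' by simp
  have rc: "rel_ent u c = rel_ent u w + (\<Sum>n\<in>UNIV. u n * (- ln (1 - eta * m n)))"
    unfolding rel_ent_def sum.distrib[symmetric]
  proof (rule sum.cong[OF refl])
    fix n
    show "u n * ln (u n / c n) = u n * ln (u n / w n) + u n * (- ln (1 - eta * m n))"
    proof (cases "u n = 0")
      case False
      then have up: "u n > 0" using unn[of n] by simp
      have "ln (u n / c n) = ln (u n / w n) - ln (1 - eta * m n)"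
        unfolding c_def using up wpos[of n] em1[of n] by (simp add: ln_div ln_mult)
      then show ?thesis by (simp add: right_diff_distrib)
    qed simp
  qed
  have "(\<Sum>n\<in>UNIV. u n * (- ln (1 - eta * m n))) \<le> (\<Sum>n\<in>UNIV. u n * (eta * (1 + eta * nu0) * m n))"
  proof (rule sum_mono)
    fix n
    have "- ln (1 - eta * m n) \<le> eta * m n + (eta * m n)^2"
    proof (rule neg_ln_bound)
      show "0 \<le> eta * m n" by (rule em0)
      show "eta * m n \<le> 1/2" using em[of n] eta(2) by linarith
    qed
    also have "(eta * m n)^2 \<le> (eta * m n) * (eta * nu0)"
      unfolding power2_eq_square using em[of n] em0[of n] by (rule mult_left_mono)
    finally have "- ln (1 - eta * m n) \<le> eta * (1 + eta * nu0) * m n" by (simp add: algebra_simps)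
    then show "u n * (- ln (1 - eta * m n)) \<le> u n * (eta * (1 + eta * nu0) * m n)"
      using unn[of n] by (rule mult_left_mono)
  qed
  also have "\<dots> = eta * (1 + eta * nu0) * (\<Sum>n\<in>UNIV. u n * m n)"
    by (simp add: sum_distrib_left algebra_simps)
  finally have "(\<Sum>n\<in>UNIV. u n * (- ln (1 - eta * m n))) \<le> eta * (1 + eta * nu0) * (\<Sum>n\<in>UNIV. u n * m n)" .
  then show ?thesis using pyth ge rc by linarith
qed

lemma rel_ent_nonneg:
  assumes u: "u \<in> capped_simplex eps" and w: "w \<in> capped_simplex eps" and wpos: "\<And>n. w n > 0"
  shows "0 \<le> rel_ent u w"
proof -
  have "(\<Sum>n\<in>UNIV. u n - w n) \<le> rel_ent u w"
    by (rule rel_ent_ge_sum) (use u wpos in \<open>auto simp: capped_simplex_def\<close>)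
  moreover have "(\<Sum>n\<in>UNIV. u n - w n) = 0" using u w unfolding capped_simplex_def by (simp add: sum_subtractf)
  ultimately show ?thesis by simp
qed

lemma rel_ent_uniform:
  assumes eps: "0 \<le> eps" "eps < 1" and u: "u \<in> capped_simplex eps"
  shows "rel_ent u (\<lambda>n::'n::finite. 1 / real CARD('n)) \<le> ln (1 / (1 - eps))"
proof -
  have N: "real CARD('n) > 0" by simp
  have "rel_ent u (\<lambda>n::'n. 1 / real CARD('n)) \<le> (\<Sum>n\<in>UNIV. u n * ln (1 / (1 - eps)))"
    unfolding rel_ent_def
  proof (rule sum_mono)
    fix n
    have un: "0 \<le> u n" "u n \<le> 1 / ((1 - eps) * real CARD('n))" using u unfolding capped_simplex_def by auto
    show "u n * ln (u n / (1 / real CARD('n))) \<le> u n * ln (1 / (1 - eps))"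
    proof (cases "u n = 0")
      case False
      then have up: "u n > 0" using un by simp
      have "u n * real CARD('n) \<le> 1 / (1 - eps)"
        using un(2) N eps by (simp add: field_simps)
      then have "ln (u n * real CARD('n)) \<le> ln (1 / (1 - eps))"
        using up N by (intro ln_mono) auto
      then show ?thesis using up by (simp add: mult_left_mono)
    qed simp
  qed
  also have "\<dots> = ln (1 / (1 - eps))"
    using u unfolding capped_simplex_def by (simp add: sum_distrib_right[symmetric])
  finally show ?thesis .
qed

lemma mw_regret:
  fixes w :: "nat \<Rightarrow> 'n::finite \<Rightarrow> real" and m :: "nat \<Rightarrow> 'n \<Rightarrow> real"
  assumes eps: "0 \<le> eps" "eps < 1"
    and w1: "w 1 = (\<lambda>n. 1 / real CARD('n))"
    and step: "\<forall>t\<in>{1..T}. w (Suc t) \<in> capped_simplex eps \<and>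
        (\<forall>v\<in>capped_simplex eps. rel_ent (w (Suc t)) (\<lambda>n. w t n * (1 - eta * m t n))
                                  \<le> rel_ent v (\<lambda>n. w t n * (1 - eta * m t n)))"
    and m: "\<And>t n. 0 \<le> m t n" "\<And>t n. m t n \<le> nu0" and eta: "eta > 0" "eta * nu0 \<le> 1/2"
  shows "\<forall>t\<in>{1..Suc T}. w t \<in> capped_simplex eps \<and> (\<forall>n. w t n > 0)"
    and "u \<in> capped_simplex eps \<Longrightarrow>
         eta * (\<Sum>t\<in>{1..T}. \<Sum>n\<in>UNIV. w t n * m t n)
           \<le> ln (1 / (1 - eps)) + eta * (1 + eta * nu0) * (\<Sum>t\<in>{1..T}. \<Sum>n\<in>UNIV. u n * m t n)"
proof -
  have pos: "t \<le> Suc T \<Longrightarrow> 1 \<le> t \<Longrightarrow> w t \<in> capped_simplex eps \<and> (\<forall>n. w t n > 0)" for t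
  proof (induction t)
    case 0 then show ?case by simp
  next
    case (Suc t)
    show ?case
    proof (cases "t = 0")
      case True then show ?thesis using w1 uniform_in_C[OF eps] by simp
    next
      case False
      then have IH: "w t \<in> capped_simplex eps" "\<And>n. w t n > 0" using Suc by auto
      have tT: "t \<in> {1..T}" using False Suc.prems by auto
      have wC: "w (Suc t) \<in> capped_simplex eps" using step tT by blast
      have opt: "\<forall>v\<in>capped_simplex eps. rel_ent (w (Suc t)) (\<lambda>n. w t n * (1 - eta * m t n))
                                  \<le> rel_ent v (\<lambda>n. w t n * (1 - eta * m t n))" using step tT by blast
      have cpos: "w t n * (1 - eta * m t n) > 0" for n
      proof -
        have "eta * m t n \<le> eta * nu0" using m(2)[of t n] eta by (intro mult_left_mono) auto
        then have "1 - eta * m t n > 0" using eta(2) by linarith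
        then show ?thesis using IH(2)[of n] by simp
      qed
      show ?thesis using wC kl_proj_pos[OF eps cpos wC opt] by blast
    qed
  qed
  then show "\<forall>t\<in>{1..Suc T}. w t \<in> capped_simplex eps \<and> (\<forall>n. w t n > 0)" by auto
  assume u: "u \<in> capped_simplex eps"
  have "rel_ent u (w (Suc t)) \<le> rel_ent u (w t) + eta * (1 + eta * nu0) * (\<Sum>n\<in>UNIV. u n * m t n) - eta * (\<Sum>n\<in>UNIV. w t n * m t n)"
    if tT: "t \<in> {1..T}" for t
  proof -
    have P: "w t \<in> capped_simplex eps" "\<And>n. w t n > 0" using pos[of t] tT by auto
    have wC: "w (Suc t) \<in> capped_simplex eps" using step tT by blast
    have opt: "\<forall>v\<in>capped_simplex eps. rel_ent (w (Suc t)) (\<lambda>n. w t n * (1 - eta * m t n))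
                                  \<le> rel_ent v (\<lambda>n. w t n * (1 - eta * m t n))" using step tT by blast
    show ?thesis by (rule mw_step[OF eps P m eta wC opt u])
  qed
  then have tel: "rel_ent u (w (Suc T)) \<le> rel_ent u (w 1) + (\<Sum>t\<in>{1..T}. eta * (1 + eta * nu0) * (\<Sum>n\<in>UNIV. u n * m t n))
      - (\<Sum>t\<in>{1..T}. eta * (\<Sum>n\<in>UNIV. w t n * m t n))"
    by (rule telescope_le[where K = "\<lambda>t. rel_ent u (w t)"])
  have "0 \<le> rel_ent u (w (Suc T))" using pos[of "Suc T"] rel_ent_nonneg[OF u] by auto
  moreover have "rel_ent u (w 1) \<le> ln (1 / (1 - eps))" unfolding w1 by (rule rel_ent_uniform[OF eps u])
  ultimately show "eta * (\<Sum>t\<in>{1..T}. \<Sum>n\<in>UNIV. w t n * m t n)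
           \<le> ln (1 / (1 - eps)) + eta * (1 + eta * nu0) * (\<Sum>t\<in>{1..T}. \<Sum>n\<in>UNIV. u n * m t n)"
    using tel by (simp add: sum_distrib_left)
qed



lemma nu_bound:
  fixes g :: "'n::finite \<Rightarrow> real^'p::finite"
  assumes mu: "mu \<in> convex hull (range g)"
  shows "(g n - mu) \<bullet> (g n - mu) \<le> nu g" and "0 \<le> nu g"
proof -
  have fin: "finite {(norm (g i - g j))\<^sup>2 | i j. True}"
  proof -
    have "{(norm (g i - g j))\<^sup>2 | i j. True} = (\<lambda>(i, j). (norm (g i - g j))\<^sup>2) ` UNIV" by auto
    then show ?thesis by simp
  qed
  have le: "(norm (g i - g j))\<^sup>2 \<le> nu g" for i j
    unfolding nu_def by (rule Max_ge[OF fin]) blast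
  then show "0 \<le> nu g" by (meson order_trans zero_le_power2)
  have "range g \<subseteq> cball (g n) (sqrt (nu g))"
  proof
    fix y assume "y \<in> range g"
    then obtain j where "y = g j" by blast
    then show "y \<in> cball (g n) (sqrt (nu g))" using le[of n j] by (simp add: dist_norm real_le_rsqrt)
  qed
  then have "convex hull (range g) \<subseteq> cball (g n) (sqrt (nu g))" by (rule hull_minimal) (rule convex_cball)
  then have "norm (g n - mu) \<le> sqrt (nu g)" using mu by (auto simp: dist_norm)
  then have "(norm (g n - mu))^2 \<le> nu g"
    using \<open>0 \<le> nu g\<close> by (metis norm_ge_zero power_mono real_sqrt_pow2)
  then show "(g n - mu) \<bullet> (g n - mu) \<le> nu g" by (simp add: power2_norm_eq_inner)
qed

lemma Smat_sym: "transpose (Smat g mu v) = Smat g mu v"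
  unfolding Smat_def transpose_sum transpose_scalar transpose_outer ..

lemma mat_inner_Smat: "mat_inner (Smat g mu v) X = (\<Sum>n\<in>UNIV. v n * ((g n - mu) \<bullet> (X *v (g n - mu))))"
  unfolding Smat_def mat_inner_sum_left mat_inner_scaleR_left mat_inner_outer_left ..

lemma quad_Smat: "x \<bullet> (Smat g mu v *v x) = (\<Sum>n\<in>UNIV. v n * ((g n - mu) \<bullet> x)^2)"
proof -
  have "x \<bullet> (Smat g mu v *v x) = mat_inner (Smat g mu v) (outer x x)" by (simp add: mat_inner_outer_right)
  also have "\<dots> = (\<Sum>n\<in>UNIV. v n * ((g n - mu) \<bullet> x)^2)"
    unfolding mat_inner_Smat outer_apply by (simp add: power2_eq_square inner_commute)
  finally show ?thesis .
qed

definition Acum where "Acum g mu w t = (\<Sum>t'\<in>{1..t}. S_round g mu w t')"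

lemma Acum_sym: "transpose (Acum g mu w t) = Acum g mu w t"
  unfolding Acum_def S_round_def transpose_sum Smat_sym ..

lemma rho_round_alt: "rho_round g mu er w t = (1 / trace (mexp (er *\<^sub>R Acum g mu w t))) *\<^sub>R mexp (er *\<^sub>R Acum g mu w t)"
  unfolding rho_round_def Acum_def Let_def ..

lemma mexp_sym_pos:
  assumes "transpose (M::real^'p::finite^'p) = M"
  shows "trace (mexp M) > 0"
proof -
  obtain u l where u: "ONB u" and M: "M = specmat u l" using spectral[OF assms] by blast
  show ?thesis unfolding M mexp_specmat[OF u] trace_specmat[OF u] by (intro sum_pos) auto
qed

lemma rho_density: "rho_round g mu er w t \<in> density_matrices"
proof -
  have sym: "transpose (er *\<^sub>R Acum g mu w t) = er *\<^sub>R Acum g mu w t"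
    by (simp add: transpose_scalar Acum_sym)
  obtain u l where u: "ONB u" and M: "er *\<^sub>R Acum g mu w t = specmat u l" using spectral[OF sym] by blast
  define Z where "Z = (\<Sum>i\<in>UNIV. exp (l i))"
  have Z: "Z > 0" unfolding Z_def by (intro sum_pos) auto
  have "rho_round g mu er w t = specmat u (\<lambda>i. exp (l i) / Z)"
    unfolding rho_round_alt M mexp_specmat[OF u] trace_specmat[OF u] scaleR_specmat Z_def[symmetric] by simp
  also have "\<dots> \<in> density_matrices"
    by (rule specmat_density[OF u]) (use Z in \<open>auto simp: Z_def sum_divide_distrib[symmetric]\<close>)
  finally show ?thesis .
qed

lemma m_round_bounds:
  assumes mu: "mu \<in> convex hull (range g)"
  shows "0 \<le> m_round g mu er w t n" and "m_round g mu er w t n \<le> nu g"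
  using density_quad[OF rho_density, of "g n - mu" g mu er w t] nu_bound(1)[OF mu, of n]
  unfolding m_round_def by auto

lemma lnZ_step:
  "ln (trace (mexp (er *\<^sub>R Acum g mu w (Suc t)))) \<le> ln (trace (mexp (er *\<^sub>R Acum g mu w t)))
     + er * mat_inner (S_round g mu w (Suc t)) (rho_round g mu er w (Suc t))"
proof -
  have A: "Acum g mu w (Suc t) = Acum g mu w t + S_round g mu w (Suc t)"
    unfolding Acum_def by simp
  have sym1: "transpose (er *\<^sub>R Acum g mu w (Suc t)) = er *\<^sub>R Acum g mu w (Suc t)"
   and sym0: "transpose (er *\<^sub>R Acum g mu w t) = er *\<^sub>R Acum g mu w t"
    by (simp_all add: transpose_scalar Acum_sym)
  have e: "er *\<^sub>R Acum g mu w t - er *\<^sub>R Acum g mu w (Suc t) = (- er) *\<^sub>R S_round g mu w (Suc t)"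
    unfolding A by (simp add: algebra_simps)
  have "mat_inner (er *\<^sub>R Acum g mu w t - er *\<^sub>R Acum g mu w (Suc t)) (rho_round g mu er w (Suc t))
      = - er * mat_inner (S_round g mu w (Suc t)) (rho_round g mu er w (Suc t))"
    unfolding e by (rule mat_inner_scaleR_left)
  moreover have "ln (trace (mexp (er *\<^sub>R Acum g mu w t))) \<ge> ln (trace (mexp (er *\<^sub>R Acum g mu w (Suc t))))
      + mat_inner (er *\<^sub>R Acum g mu w t - er *\<^sub>R Acum g mu w (Suc t)) (rho_round g mu er w (Suc t))"
    unfolding rho_round_alt by (rule gibbs[OF sym1 sym0])
  ultimately show ?thesis by linarith
qed

lemma lnZ_total:
  fixes g :: "'n::finite \<Rightarrow> real^'p::finite"
  shows "ln (trace (mexp (er *\<^sub>R Acum g mu w T))) \<le> ln (real CARD('p))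
     + er * (\<Sum>t\<in>{1..T}. mat_inner (S_round g mu w t) (rho_round g mu er w t))"
proof (induction T)
  case 0
  have sym: "transpose (0::real^'p^'p) = 0" by (simp add: transpose_def vec_eq_iff)
  obtain u l where u: "ONB u" and "(0::real^'p^'p) = specmat u l" using spectral[OF sym] by blast
  have z: "(0::real^'p^'p) = specmat u (\<lambda>_. 0)" unfolding specmat_def by simp
  have "trace (mexp (er *\<^sub>R Acum g mu w 0)) = real CARD('p)"
  proof -
    have "er *\<^sub>R Acum g mu w 0 = specmat u (\<lambda>_. 0)" unfolding Acum_def using z by simp
    then show ?thesis by (simp add: mexp_specmat[OF u] trace_specmat[OF u])
  qed
  then show ?case by simp
next
  case (Suc T)
  then show ?case using lnZ_step[of er g mu w T] by (simp add: distrib_left)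
qed



lemma part1:
  fixes g :: "'n::finite \<Rightarrow> real^'p::finite"
    and mu :: "real^'p" and eps eta_w eta_rho :: real and T :: nat
    and w :: "nat \<Rightarrow> 'n \<Rightarrow> real"
  assumes T: "T \<ge> 1"
    and eps: "0 \<le> eps" "eps < 1"
    and mu: "mu \<in> convex hull (range g)"
    and run: "mw_mmw_run eps g mu eta_w eta_rho T w"
    and h: "0 < eta_rho * nu g" "eta_rho * nu g \<le> 1/2" "0 < eta_w * nu g" "eta_w * nu g \<le> 1/2"
  shows "S_bar g mu T w = Smat g mu (w_bar T w) \<and>
           op_norm (S_bar g mu T w) \<le>
             (1 + eta_rho * nu g) * (1 + eta_w * nu g) * OPT eps g mu
             + (1 + eta_rho * nu g) * ln (1 / (1 - eps)) / (real T * eta_w)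
             + ln (real CARD('p)) / (real T * eta_rho)"
proof -
  let ?C = "capped_simplex eps :: ('n \<Rightarrow> real) set"
  define nu0 where "nu0 = nu g"
  have nu0: "0 \<le> nu0" unfolding nu0_def by (rule nu_bound(2)[OF mu])
  have nupos: "nu0 > 0" using h(1) nu0 unfolding nu0_def[symmetric] by (metis less_eq_real_def mult_zero_right)
  have er: "eta_rho > 0" using h(1) nupos unfolding nu0_def[symmetric] by (simp add: zero_less_mult_iff)
  have ew: "eta_w > 0" using h(3) nupos unfolding nu0_def[symmetric] by (simp add: zero_less_mult_iff)
  define m where "m t n = m_round g mu eta_rho w t n" for t n
  have mb: "0 \<le> m t n" "m t n \<le> nu0" for t n unfolding m_def nu0_def using m_round_bounds[OF mu] by auto
  have w1: "w 1 = (\<lambda>n. 1 / real CARD('n))" using run unfolding mw_mmw_run_def by blast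
  have step: "\<forall>t\<in>{1..T}. w (Suc t) \<in> ?C \<and>
        (\<forall>v\<in>?C. rel_ent (w (Suc t)) (\<lambda>n. w t n * (1 - eta_w * m t n))
                                  \<le> rel_ent v (\<lambda>n. w t n * (1 - eta_w * m t n)))"
    using run unfolding mw_mmw_run_def wtilde_round_def m_def by blast
  have ewnu: "eta_w * nu0 \<le> 1/2" using h(4) unfolding nu0_def .
  note MW = mw_regret[OF eps w1 step mb ew ewnu]
  have wC: "w t \<in> ?C" if "t \<in> {1..T}" for t using MW(1) that by auto
  define I where "I t = mat_inner (S_round g mu w t) (rho_round g mu eta_rho w t)" for t
  have Ieq: "I t = (\<Sum>n\<in>UNIV. w t n * m t n)" for t
    unfolding I_def S_round_def mat_inner_Smat m_def m_round_def ..
  define L where "L = ln (1 / (1 - eps))"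
  define P where "P = ln (real CARD('p))"
  define X where "X = op_norm (S_bar g mu T w)"
  define sig where "sig u = (SUP \<rho>\<in>density_matrices. mat_inner (Smat g mu u) \<rho>)" for u :: "'n \<Rightarrow> real"
  have Tpos: "real T > 0" using T by simp
  have Sbar_eq: "S_bar g mu T w = Smat g mu (w_bar T w)"
  proof -
    have "S_bar g mu T w = (\<Sum>t\<in>{1..T}. \<Sum>n\<in>UNIV. ((1 / real T) * w t n) *\<^sub>R outer (g n - mu) (g n - mu))"
      unfolding S_bar_def S_round_def Smat_def by (simp add: scaleR_sum_right)
    also have "\<dots> = (\<Sum>n\<in>UNIV. \<Sum>t\<in>{1..T}. ((1 / real T) * w t n) *\<^sub>R outer (g n - mu) (g n - mu))"
      by (rule sum.swap)
    also have "\<dots> = Smat g mu (w_bar T w)"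
      unfolding Smat_def w_bar_def by (simp add: scaleR_sum_left sum_distrib_left)
    finally show ?thesis .
  qed
  have Xbound: "X \<le> (P + eta_rho * (\<Sum>t\<in>{1..T}. I t)) / (eta_rho * real T)"
  proof -
    obtain u l where u: "ONB u" and A: "Acum g mu w T = specmat u l" using spectral[OF Acum_sym] by blast
    have lnn: "0 \<le> l i" for i
    proof -
      have "l i = u i \<bullet> (Acum g mu w T *v u i)"
        unfolding A specmat_eigen[OF u] using ONB_orth[OF u, of i i] by simp
      also have "\<dots> = (\<Sum>t\<in>{1..T}. u i \<bullet> (Smat g mu (w t) *v u i))"
        unfolding Acum_def S_round_def sum_matrix_vector inner_sum_right ..
      also have "\<dots> \<ge> 0"
      proof (rule sum_nonneg)
        fix t assume "t \<in> {1..T}"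
        then have "\<forall>n. 0 \<le> w t n" using wC unfolding capped_simplex_def by blast
        then show "0 \<le> u i \<bullet> (Smat g mu (w t) *v u i)" unfolding quad_Smat by (auto intro: sum_nonneg)
      qed
      finally show ?thesis .
    qed
    define Z where "Z = trace (mexp (eta_rho *\<^sub>R Acum g mu w T))"
    have Zeq: "Z = (\<Sum>i\<in>UNIV. exp (eta_rho * l i))"
      unfolding Z_def A scaleR_specmat mexp_specmat[OF u] trace_specmat[OF u] ..
    have lZ: "eta_rho * l i \<le> ln Z" for i
    proof -
      have "exp (eta_rho * l i) \<le> Z" unfolding Zeq by (rule member_le_sum) auto
      then show ?thesis by (metis exp_gt_zero less_le_trans order.refl ln_exp ln_le_cancel_iff)
    qed
    have Sb: "S_bar g mu T w = specmat u (\<lambda>i. (1 / real T) * l i)"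
      unfolding S_bar_def Acum_def[symmetric] A scaleR_specmat ..
    have "X \<le> ln Z / (eta_rho * real T)"
      unfolding X_def Sb
    proof (rule op_norm_specmat[OF u])
      fix i
      have "\<bar>1 / real T * l i\<bar> = l i / real T" using lnn[of i] Tpos by simp
      also have "\<dots> \<le> ln Z / (eta_rho * real T)"
        using lZ[of i] er Tpos by (simp add: field_simps)
      finally show "\<bar>1 / real T * l i\<bar> \<le> ln Z / (eta_rho * real T)" .
    qed
    also have "\<dots> \<le> (P + eta_rho * (\<Sum>t\<in>{1..T}. I t)) / (eta_rho * real T)"
      using lnZ_total[of eta_rho g mu w T] er Tpos unfolding Z_def P_def I_def
      by (intro divide_right_mono) auto
    finally show ?thesis .
  qed
  have rho1: "rho_round g mu eta_rho w 1 \<in> density_matrices" by (rule rho_density)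
  have inner_le: "mat_inner (Smat g mu u) \<rho> \<le> (\<Sum>n\<in>UNIV. u n * ((g n - mu) \<bullet> (g n - mu)))"
    and inner_ge: "0 \<le> mat_inner (Smat g mu u) \<rho>"
    if "u \<in> ?C" "\<rho> \<in> density_matrices" for u \<rho>
  proof -
    have unn: "0 \<le> u n" for n using that unfolding capped_simplex_def by auto
    show "mat_inner (Smat g mu u) \<rho> \<le> (\<Sum>n\<in>UNIV. u n * ((g n - mu) \<bullet> (g n - mu)))"
      unfolding mat_inner_Smat using density_quad[OF that(2)] unn by (intro sum_mono mult_left_mono) auto
    show "0 \<le> mat_inner (Smat g mu u) \<rho>"
      unfolding mat_inner_Smat using density_quad[OF that(2)] unn by (intro sum_nonneg) auto
  qed
  have bdd: "bdd_above ((\<lambda>\<rho>. mat_inner (Smat g mu u) \<rho>) ` density_matrices)" if "u \<in> ?C" for u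
    by (rule bdd_aboveI2) (rule inner_le[OF that])
  have sig_ge: "mat_inner (Smat g mu u) \<rho> \<le> sig u" if "u \<in> ?C" "\<rho> \<in> density_matrices" for u \<rho>
    unfolding sig_def by (rule cSUP_upper[OF that(2) bdd[OF that(1)]])
  have sig_nn: "0 \<le> sig u" if "u \<in> ?C" for u
    using inner_ge[OF that rho1] sig_ge[OF that rho1] by linarith
  have key: "X \<le> P / (real T * eta_rho) + L / (real T * eta_w) + (1 + eta_w * nu0) * sig u" if u: "u \<in> ?C" for u
  proof -
    have reg: "eta_w * (\<Sum>t\<in>{1..T}. I t) \<le> L + eta_w * (1 + eta_w * nu0) * (\<Sum>t\<in>{1..T}. \<Sum>n\<in>UNIV. u n * m t n)"
      using MW(2)[OF u] unfolding Ieq L_def .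
    have "(\<Sum>t\<in>{1..T}. \<Sum>n\<in>UNIV. u n * m t n) \<le> real T * sig u"
    proof -
      have "(\<Sum>t\<in>{1..T}. \<Sum>n\<in>UNIV. u n * m t n) \<le> of_nat (card {1..T}) * sig u"
      proof (rule sum_bounded_above)
        fix t
        have "(\<Sum>n\<in>UNIV. u n * m t n) = mat_inner (Smat g mu u) (rho_round g mu eta_rho w t)"
          unfolding mat_inner_Smat m_def m_round_def ..
        also have "\<dots> \<le> sig u" by (rule sig_ge[OF u rho_density])
        finally show "(\<Sum>n\<in>UNIV. u n * m t n) \<le> sig u" .
      qed
      then show ?thesis by simp
    qed
    then have "eta_w * (1 + eta_w * nu0) * (\<Sum>t\<in>{1..T}. \<Sum>n\<in>UNIV. u n * m t n) \<le> eta_w * (1 + eta_w * nu0) * (real T * sig u)"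
      using ew nu0 by (intro mult_left_mono) auto
    with reg have "eta_w * (\<Sum>t\<in>{1..T}. I t) \<le> L + eta_w * (1 + eta_w * nu0) * (real T * sig u)" by linarith
    then have sumI: "(\<Sum>t\<in>{1..T}. I t) \<le> L / eta_w + (1 + eta_w * nu0) * (real T * sig u)"
      using ew by (simp add: field_simps)
    have "X \<le> P / (real T * eta_rho) + (\<Sum>t\<in>{1..T}. I t) / real T"
      using Xbound er Tpos by (simp add: field_simps)
    also have "(\<Sum>t\<in>{1..T}. I t) / real T \<le> (L / eta_w + (1 + eta_w * nu0) * (real T * sig u)) / real T"
      using sumI Tpos by (simp add: divide_right_mono)
    also have "(L / eta_w + (1 + eta_w * nu0) * (real T * sig u)) / real T = L / (real T * eta_w) + (1 + eta_w * nu0) * sig u"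
      using Tpos ew by (simp add: field_simps)
    finally show ?thesis by simp
  qed
  have Cne: "?C \<noteq> {}" using uniform_in_C[OF eps] by blast
  have OPTeq: "OPT eps g mu = (INF u\<in>?C. sig u)" unfolding OPT_def sig_def ..
  have opt_nn: "0 \<le> OPT eps g mu" unfolding OPTeq by (rule cINF_greatest[OF Cne sig_nn])
  have "(X - P / (real T * eta_rho) - L / (real T * eta_w)) / (1 + eta_w * nu0) \<le> OPT eps g mu"
    unfolding OPTeq
  proof (rule cINF_greatest[OF Cne])
    fix u assume "u \<in> ?C"
    then show "(X - P / (real T * eta_rho) - L / (real T * eta_w)) / (1 + eta_w * nu0) \<le> sig u"
      using key[of u] ew nu0 by (simp add: divide_le_eq algebra_simps add_pos_nonneg)
  qed
  then have X1: "X \<le> (1 + eta_w * nu0) * OPT eps g mu + L / (real T * eta_w) + P / (real T * eta_rho)"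
    using ew nu0 by (simp add: divide_le_eq algebra_simps add_pos_nonneg)
  have L0: "0 \<le> L" unfolding L_def using eps by simp
  have b0: "0 \<le> eta_rho * nu0" using er nu0 by simp
  have "(1 + eta_w * nu0) * OPT eps g mu \<le> (1 + eta_rho * nu0) * ((1 + eta_w * nu0) * OPT eps g mu)"
  proof -
    have q: "0 \<le> (1 + eta_w * nu0) * OPT eps g mu" using opt_nn ew nu0 by simp
    show ?thesis using mult_nonneg_nonneg[OF b0 q] by (simp add: algebra_simps)
  qed
  moreover have "L / (real T * eta_w) \<le> (1 + eta_rho * nu0) * L / (real T * eta_w)"
    using L0 Tpos ew b0 by (simp add: divide_right_mono mult_le_cancel_right1)
  ultimately have "X \<le> (1 + eta_rho * nu0) * (1 + eta_w * nu0) * OPT eps g mu + (1 + eta_rho * nu0) * L / (real T * eta_w) + P / (real T * eta_rho)"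
    using X1 by (simp add: mult.assoc)
  then show ?thesis using Sbar_eq unfolding X_def L_def P_def nu0_def by simp
qed



lemma OPT_le_nu:
  fixes g :: "'n::finite \<Rightarrow> real^'p::finite"
  assumes eps: "0 \<le> eps" "eps < 1" and mu: "mu \<in> convex hull (range g)"
  shows "OPT eps g mu \<le> nu g"
proof -
  let ?C = "capped_simplex eps :: ('n \<Rightarrow> real) set"
  define sig where "sig u = (SUP \<rho>\<in>density_matrices. mat_inner (Smat g mu u) \<rho>)" for u :: "'n \<Rightarrow> real"
  have rho1: "rho_round g mu 0 (\<lambda>_ _. 0) 1 \<in> density_matrices" by (rule rho_density)
  have inner_le: "mat_inner (Smat g mu u) \<rho> \<le> (\<Sum>n\<in>UNIV. u n * ((g n - mu) \<bullet> (g n - mu)))"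
    and inner_ge: "0 \<le> mat_inner (Smat g mu u) \<rho>"
    if "u \<in> ?C" "\<rho> \<in> density_matrices" for u \<rho>
  proof -
    have unn: "0 \<le> u n" for n using that unfolding capped_simplex_def by auto
    show "mat_inner (Smat g mu u) \<rho> \<le> (\<Sum>n\<in>UNIV. u n * ((g n - mu) \<bullet> (g n - mu)))"
      unfolding mat_inner_Smat using density_quad[OF that(2)] unn by (intro sum_mono mult_left_mono) auto
    show "0 \<le> mat_inner (Smat g mu u) \<rho>"
      unfolding mat_inner_Smat using density_quad[OF that(2)] unn by (intro sum_nonneg) auto
  qed
  have bdd: "bdd_above ((\<lambda>\<rho>. mat_inner (Smat g mu u) \<rho>) ` density_matrices)" if "u \<in> ?C" for u
    by (rule bdd_aboveI2) (rule inner_le[OF that])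
  have sig_ge: "mat_inner (Smat g mu u) \<rho> \<le> sig u" if "u \<in> ?C" "\<rho> \<in> density_matrices" for u \<rho>
    unfolding sig_def by (rule cSUP_upper[OF that(2) bdd[OF that(1)]])
  have sig_nn: "0 \<le> sig u" if "u \<in> ?C" for u
    using inner_ge[OF that rho1] sig_ge[OF that rho1] by linarith
  define u0 where "u0 = (\<lambda>n::'n. 1 / real CARD('n))"
  have u0C: "u0 \<in> ?C" unfolding u0_def by (rule uniform_in_C[OF eps])
  have OPTeq: "OPT eps g mu = (INF u\<in>?C. sig u)" unfolding OPT_def sig_def ..
  have bddb: "bdd_below (sig ` ?C)" by (rule bdd_belowI2) (rule sig_nn)
  have o1: "OPT eps g mu \<le> sig u0" unfolding OPTeq by (rule cINF_lower[OF bddb u0C])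
  have ne: "(density_matrices :: (real^'p^'p) set) \<noteq> {}" using rho1 by (metis empty_iff)
  have bnd: "mat_inner (Smat g mu u0) \<rho> \<le> nu g" if r: "\<rho> \<in> density_matrices" for \<rho>
  proof -
    have "mat_inner (Smat g mu u0) \<rho> \<le> (\<Sum>n\<in>UNIV. u0 n * ((g n - mu) \<bullet> (g n - mu)))" by (rule inner_le[OF u0C r])
    also have "\<dots> \<le> (\<Sum>n\<in>UNIV. u0 n * nu g)"
      using nu_bound(1)[OF mu] by (intro sum_mono mult_left_mono) (auto simp: u0_def)
    also have "\<dots> = nu g" unfolding u0_def by (simp add: sum_distrib_right[symmetric])
    finally show ?thesis .
  qed
  have "sig u0 \<le> nu g" unfolding sig_def by (rule cSUP_least[OF ne bnd])
  then show ?thesis using o1 by linarith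
qed

theorem mainTheorem6:
  fixes g :: "'n::finite \<Rightarrow> real^'p::finite"
    and mu :: "real^'p" and eps eta_w eta_rho :: real and T :: nat
    and w :: "nat \<Rightarrow> 'n \<Rightarrow> real"
  assumes T: "T \<ge> 1"
    and eps: "0 \<le> eps" "eps < 1"
    and mu: "mu \<in> convex hull (range g)"
    and run: "mw_mmw_run eps g mu eta_w eta_rho T w"
  shows "(0 < eta_rho * nu g \<and> eta_rho * nu g \<le> 1/2 \<and> 0 < eta_w * nu g \<and> eta_w * nu g \<le> 1/2 \<longrightarrow>
           S_bar g mu T w = Smat g mu (w_bar T w) \<and>
           op_norm (S_bar g mu T w) \<le>
             (1 + eta_rho * nu g) * (1 + eta_w * nu g) * OPT eps g mu
             + (1 + eta_rho * nu g) * ln (1 / (1 - eps)) / (real T * eta_w)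
             + ln (real CARD('p)) / (real T * eta_rho))
       \<and> (0 < nu g \<and> 0 < eps \<and> CARD('p) \<ge> 2 \<and>
           eta_w = (1 / nu g) * sqrt (ln (1 / (1 - eps)) / real T) \<and>
           eta_rho = (1 / nu g) * sqrt (ln (real CARD('p)) / real T) \<and>
           real T \<ge> 4 * max (ln (1 / (1 - eps))) (ln (real CARD('p))) \<longrightarrow>
           gamma_val g mu (w_bar T w) - OPT eps g mu
             \<le> 4 * nu g * (sqrt (ln (1 / (1 - eps)) / real T) + sqrt (ln (real CARD('p)) / real T)))"
proof (intro conjI impI)
  assume h: "0 < eta_rho * nu g \<and> eta_rho * nu g \<le> 1/2 \<and> 0 < eta_w * nu g \<and> eta_w * nu g \<le> 1/2"
  show "S_bar g mu T w = Smat g mu (w_bar T w)" using part1[OF T eps mu run] h by blast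
  show "op_norm (S_bar g mu T w) \<le>
             (1 + eta_rho * nu g) * (1 + eta_w * nu g) * OPT eps g mu
             + (1 + eta_rho * nu g) * ln (1 / (1 - eps)) / (real T * eta_w)
             + ln (real CARD('p)) / (real T * eta_rho)" using part1[OF T eps mu run] h by blast
next
  assume h: "0 < nu g \<and> 0 < eps \<and> CARD('p) \<ge> 2 \<and>
           eta_w = (1 / nu g) * sqrt (ln (1 / (1 - eps)) / real T) \<and>
           eta_rho = (1 / nu g) * sqrt (ln (real CARD('p)) / real T) \<and>
           real T \<ge> 4 * max (ln (1 / (1 - eps))) (ln (real CARD('p)))"
  define nu0 where "nu0 = nu g"
  define L where "L = ln (1 / (1 - eps))"
  define P where "P = ln (real CARD('p))"
  define a where "a = sqrt (L / real T)"
  define b where "b = sqrt (P / real T)"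
  define Opt where "Opt = OPT eps g mu"
  have nupos: "nu0 > 0" using h unfolding nu0_def by simp
  have Tpos: "real T > 0" using T by simp
  have Lpos: "L > 0" unfolding L_def using h eps by simp
  have Ppos: "P > 0" unfolding P_def using h by simp
  have TL: "4 * L \<le> real T" and TP: "4 * P \<le> real T" using h unfolding L_def P_def by auto
  have apos: "a > 0" unfolding a_def using Lpos Tpos by simp
  have bpos: "b > 0" unfolding b_def using Ppos Tpos by simp
  have a2: "a^2 = L / real T" unfolding a_def using Lpos Tpos by simp
  have b2: "b^2 = P / real T" unfolding b_def using Ppos Tpos by simp
  have ahalf: "a \<le> 1/2"
  proof -
    have "L / real T \<le> 1/4" using TL Tpos by (simp add: field_simps)
    then have "a \<le> sqrt (1/4)" unfolding a_def by (rule real_sqrt_le_mono)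
    also have "sqrt (1/4) = (1/2::real)" by (simp add: real_sqrt_divide)
    finally show ?thesis .
  qed
  have bhalf: "b \<le> 1/2"
  proof -
    have "P / real T \<le> 1/4" using TP Tpos by (simp add: field_simps)
    then have "b \<le> sqrt (1/4)" unfolding b_def by (rule real_sqrt_le_mono)
    also have "sqrt (1/4) = (1/2::real)" by (simp add: real_sqrt_divide)
    finally show ?thesis .
  qed
  have ew: "eta_w = a / nu0" and er: "eta_rho = b / nu0" using h unfolding a_def b_def L_def P_def nu0_def by auto
  have ewn: "eta_w * nu g = a" and ern: "eta_rho * nu g = b" unfolding ew er nu0_def[symmetric] using nupos by auto
  have hyp: "0 < eta_rho * nu g \<and> eta_rho * nu g \<le> 1/2 \<and> 0 < eta_w * nu g \<and> eta_w * nu g \<le> 1/2"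
    unfolding ewn ern using apos bpos ahalf bhalf by simp
  have P1: "S_bar g mu T w = Smat g mu (w_bar T w) \<and>
           op_norm (S_bar g mu T w) \<le>
             (1 + eta_rho * nu g) * (1 + eta_w * nu g) * OPT eps g mu
             + (1 + eta_rho * nu g) * ln (1 / (1 - eps)) / (real T * eta_w)
             + ln (real CARD('p)) / (real T * eta_rho)" using part1[OF T eps mu run] hyp by blast
  have gam: "gamma_val g mu (w_bar T w) = op_norm (S_bar g mu T w)" unfolding gamma_val_def using P1 by simp
  have t1: "L / (real T * eta_w) = nu0 * a"
  proof -
    have "L = real T * a^2" using a2 Tpos by simp
    then show ?thesis unfolding ew using Tpos apos nupos by (simp add: field_simps power2_eq_square)
  qed
  have t2: "P / (real T * eta_rho) = nu0 * b"
  proof -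
    have "P = real T * b^2" using b2 Tpos by simp
    then show ?thesis unfolding er using Tpos bpos nupos by (simp add: field_simps power2_eq_square)
  qed
  have P1b: "op_norm (S_bar g mu T w) \<le> (1 + b) * (1 + a) * Opt + (1 + b) * L / (real T * eta_w) + P / (real T * eta_rho)"
    using P1 unfolding ern ewn L_def[symmetric] P_def[symmetric] Opt_def[symmetric] by blast
  have q1: "(1 + b) * L / (real T * eta_w) = (1 + b) * (nu0 * a)" by (metis t1 times_divide_eq_right)
  have main: "op_norm (S_bar g mu T w) \<le> (1 + b) * (1 + a) * Opt + (1 + b) * (nu0 * a) + nu0 * b"
    using P1b unfolding q1 t2 .
  have Ole: "Opt \<le> nu0" unfolding Opt_def nu0_def by (rule OPT_le_nu[OF eps mu])
  have e1: "(1 + b) * (1 + a) * Opt = Opt + (a + b + a * b) * Opt" by (simp add: algebra_simps)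
  have e2: "(1 + b) * (nu0 * a) = nu0 * a + nu0 * (a * b)" by (simp add: algebra_simps)
  have s1: "(a + b + a * b) * Opt \<le> (a + b + a * b) * nu0"
    using Ole apos bpos by (intro mult_left_mono) auto
  have e3: "(a + b + a * b) * nu0 = nu0 * a + nu0 * b + nu0 * (a * b)" by (simp add: algebra_simps)
  have s2: "nu0 * (a * b) \<le> nu0 * b"
  proof -
    have "a * b \<le> 1 * b" using ahalf bpos by (intro mult_right_mono) auto
    then show ?thesis using nupos by (intro mult_left_mono) auto
  qed
  have e4: "4 * nu0 * (a + b) = 4 * (nu0 * a) + 4 * (nu0 * b)" by (simp add: algebra_simps)
  have pa: "0 \<le> nu0 * a" using nupos apos by simp
  have "gamma_val g mu (w_bar T w) - Opt \<le> 4 * nu0 * (a + b)"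
    using main gam e1 e2 s1 e3 s2 e4 pa by linarith
  then show "gamma_val g mu (w_bar T w) - OPT eps g mu
             \<le> 4 * nu g * (sqrt (ln (1 / (1 - eps)) / real T) + sqrt (ln (real CARD('p)) / real T))"
    unfolding Opt_def nu0_def a_def b_def L_def P_def .
qed

end
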